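(* Fix $0<p<1$, let $m(z)=\langle\phi,(zI-K_\infty)^{-1}\phi\rangle$, and set $\mu_n=\langle\phi,K_\infty^n\phi\rangle$ for $n\ge0$. Then for $|z|>\|K_\infty\|$, $m(z)=\sum_{n\ge0}\mu_nz^{-(n+1)}$. Moreover, the identity $$m(z)=\frac{m(z/p)}{1-m(z/p)}+\frac{m(z/(1-p))}{\big(1-m(z/p)\big)\big(1-m(z/p)-m(z/(1-p))\big)}\quad(|z|>\|K_\infty\|+1)$$ determines $(\mu_n)$ recursively: for each $n\ge1$ there is a polynomial $P_n\in\mathbb Q[p][X_0,\dots,X_{n-1}]$ with $(1-p^{n+1}-(1-p)^{n+1})\mu_n=P_n(\mu_0,\dots,\mu_{n-1})$, and $1-p^{n+1}-(1-p)^{n+1}>0$ for every $n\ge1$, so $\mu_n$ is uniquely determined by $\mu_0,\dots,\mu_{n-1}$. The first moments are $\mu_0=1$, $\mu_1=\frac1{2p(1-p)}=\frac1{1-q}$ with $q=p^2+(1-p)^2$, $\mu_2=\frac{p^2-p+1}{3p^2(1-p)^2}$, and $\mu_3=\frac{12p^4-24p^3+38p^2-26p+11}{24p^3(1-p)^3(p^2-p+2)}$.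
   Context: Let $S_0(x)=x/3$, $S_2(x)=(x+2)/3$ on $[0,1]$ and let $C$ be the middle-third Cantor set. For $0<p<1$, $\mu_p$ is the unique Borel probability measure on $[0,1]$ with $\mu_p=p\,\mu_p\circ S_0^{-1}+(1-p)\,\mu_p\circ S_2^{-1}$. For words $w\in\{0,2\}^n$, $S_w=S_{w_1}\circ\cdots\circ S_{w_n}$, $C_w=S_w(C)$. Inner product $\langle f,g\rangle=\int\overline fg\,d\mu_p$; $\phi=1_C$. $K_mf=\sum_{|u|\le m}\langle1_{C_u},f\rangle1_{C_u}$ and $K_\infty=\lim_{m\to\infty}K_m$ in operator norm (this limit exists and is compact, positive, self-adjoint). *)

theory Defs
  imports "HOL-Probability.Probability"
begin

definition Sd :: "nat \<Rightarrow> real \<Rightarrow> real" where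
  "Sd d x = (x + real d) / 3"

definition words_upto :: "nat \<Rightarrow> nat list set" where
  "words_upto m = {u. length u \<le> m \<and> set u \<subseteq> {0, 2}}"

definition words_of_len :: "nat \<Rightarrow> nat list set" where
  "words_of_len n = {u. length u = n \<and> set u \<subseteq> {0, 2}}"

definition Sw :: "nat list \<Rightarrow> real \<Rightarrow> real" where
  "Sw w = foldr (\<lambda>d f. Sd d \<circ> f) w id"

definition Cantor :: "real set" where
  "Cantor = (\<Inter>n. \<Union>w\<in>words_of_len n. Sw w ` {0..1})"

definition Cw :: "nat list \<Rightarrow> real set" where
  "Cw w = Sw w ` Cantor"

definition is_mu :: "real \<Rightarrow> real measure \<Rightarrow> bool" where
  "is_mu p M \<longleftrightarrow> prob_space M \<and> space M = {0..1} \<and>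
     sets M = sets (restrict_space borel {0..1}) \<and>
     (\<forall>A\<in>sets M. emeasure M A =
        ennreal p * emeasure M (Sd 0 -` A \<inter> {0..1})
        + ennreal (1 - p) * emeasure M (Sd 2 -` A \<inter> {0..1}))"

definition mu :: "real \<Rightarrow> real measure" where
  "mu p = (THE M. is_mu p M)"

definition L2 :: "real \<Rightarrow> (real \<Rightarrow> complex) set" where
  "L2 p = {f. f \<in> borel_measurable (mu p) \<and> integrable (mu p) (\<lambda>x. (cmod (f x))^2)}"

definition L2norm :: "real \<Rightarrow> (real \<Rightarrow> complex) \<Rightarrow> real" where
  "L2norm p f = sqrt (\<integral>x. (cmod (f x))^2 \<partial>(mu p))"

definition inner_mu :: "real \<Rightarrow> (real \<Rightarrow> complex) \<Rightarrow> (real \<Rightarrow> complex) \<Rightarrow> complex" where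
  "inner_mu p f g = (\<integral>x. cnj (f x) * g x \<partial>(mu p))"

definition phi :: "real \<Rightarrow> complex" where
  "phi = indicator Cantor"

definition Km :: "real \<Rightarrow> nat \<Rightarrow> (real \<Rightarrow> complex) \<Rightarrow> real \<Rightarrow> complex" where
  "Km p m f x = (\<Sum>u\<in>words_upto m. inner_mu p (indicator (Cw u)) f * indicator (Cw u) x)"

text \<open>K_infinity as the limit of K_m (taken pointwise; it agrees a.e. with the
  operator-norm limit on L^2(mu_p)).\<close>
definition Kinf :: "real \<Rightarrow> (real \<Rightarrow> complex) \<Rightarrow> real \<Rightarrow> complex" where
  "Kinf p f x = lim (\<lambda>m. Km p m f x)"

definition Kinf_norm :: "real \<Rightarrow> real" where
  "Kinf_norm p = Sup {L2norm p (Kinf p f) | f. f \<in> L2 p \<and> L2norm p f \<le> 1}"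

definition moment :: "real \<Rightarrow> nat \<Rightarrow> complex" where
  "moment p n = inner_mu p phi ((Kinf p ^^ n) phi)"

text \<open>m(z) = <phi, (zI - K_inf)^{-1} phi>: the value <phi,g> for the (a.e. unique)
  g in L^2 solving z g - K_inf g = phi.\<close>
definition mfun :: "real \<Rightarrow> complex \<Rightarrow> complex" where
  "mfun p z = (THE c. \<exists>g\<in>L2 p. (AE x in mu p. z * g x - Kinf p g x = phi x)
                                 \<and> c = inner_mu p phi g)"

text \<open>A polynomial is a finite list of monomials (c, e, es) standing for
  c * p^e * prod_i X_i^(es!i).  It has variables among p, X_0..X_{n-1}
  iff every exponent list es has length n.\<close>
type_synonym ratpoly = "(rat \<times> nat \<times> nat list) list"

definition ratpoly_vars :: "nat \<Rightarrow> ratpoly \<Rightarrow> bool" where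
  "ratpoly_vars n P \<longleftrightarrow> (\<forall>(c, e, es)\<in>set P. length es = n)"

definition ratpoly_eval :: "ratpoly \<Rightarrow> 'a::field_char_0 \<Rightarrow> (nat \<Rightarrow> 'a) \<Rightarrow> 'a" where
  "ratpoly_eval P p X =
     (\<Sum>(c, e, es)\<leftarrow>P. of_rat c * p ^ e * (\<Prod>i<length es. X i ^ (es ! i)))"

end

theory Submission
  imports Defs
begin

lemma Sw_Nil[simp]: "Sw [] = id" by (simp add: Sw_def)
lemma Sw_Cons[simp]: "Sw (d # u) = Sd d \<circ> Sw u" by (simp add: Sw_def)

definition dg :: "bool \<Rightarrow> nat" where "dg b = (if b then 2 else 0)"

definition Xs :: "bool stream \<Rightarrow> real" where
  "Xs w = (\<Sum>i. real (dg (w !! i)) / 3 ^ Suc i)"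

lemma summable_geo3: "summable (\<lambda>i. 2 / (3::real) ^ Suc i)"
proof -
  have "summable (\<lambda>i. (2/3) * (1/(3::real)) ^ i)"
    by (intro summable_mult summable_geometric) auto
  then show ?thesis by (simp add: power_divide field_simps)
qed

lemma suminf_geo3: "(\<Sum>i. 2 / (3::real) ^ Suc i) = 1"
proof -
  have "(\<lambda>i. (2/3) * (1/(3::real)) ^ i) sums ((2/3) * (1 / (1 - 1/3)))"
    by (intro sums_mult geometric_sums) auto
  then have "(\<lambda>i. 2 / (3::real) ^ Suc i) sums 1"
    by (simp add: power_divide field_simps)
  then show ?thesis by (simp add: sums_iff)
qed

lemma Xs_summable: "summable (\<lambda>i. real (dg (w !! i)) / 3 ^ Suc i)"
  by (rule summable_comparison_test'[OF summable_geo3, of 0]) (auto simp: dg_def)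

lemma Xs_nonneg: "0 \<le> Xs w"
  unfolding Xs_def by (intro suminf_nonneg Xs_summable) (auto simp: dg_def)

lemma Xs_le1: "Xs w \<le> 1"
proof -
  have "Xs w \<le> (\<Sum>i. 2 / (3::real) ^ Suc i)"
    unfolding Xs_def by (intro suminf_le Xs_summable summable_geo3) (auto simp: dg_def divide_right_mono)
  then show ?thesis using suminf_geo3 by simp
qed

lemma Xs_Stream: "Xs (b ## w) = Sd (dg b) (Xs w)"
proof -
  let ?f = "\<lambda>i. real (dg ((b ## w) !! i)) / 3 ^ Suc i"
  have s: "summable ?f" by (rule Xs_summable)
  have "(\<Sum>n. ?f (Suc n)) = suminf ?f - ?f 0" by (rule suminf_split_head[OF s])
  moreover have "(\<Sum>n. ?f (Suc n)) = Xs w / 3"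
    unfolding Xs_def by (subst suminf_divide[symmetric, OF Xs_summable]) (simp add: field_simps)
  ultimately have "suminf ?f = real (dg b) / 3 + Xs w / 3" by simp
  then show ?thesis by (simp add: Xs_def Sd_def add_divide_distrib)
qed

lemma Xs_measurable[measurable]: "Xs \<in> borel_measurable (stream_space (measure_pmf P))"
  unfolding Xs_def by measurable


abbreviation "RB \<equiv> restrict_space borel {0..1::real}"

lemma sets_RB_iff: "A \<in> sets RB \<longleftrightarrow> A \<subseteq> {0..1} \<and> A \<in> sets borel"
  by (rule sets_restrict_space_iff) auto

lemma Sd_borel[measurable]: "Sd d \<in> borel_measurable borel"
  unfolding Sd_def by measurable

lemma Sd_pre_sets: "A \<in> sets RB \<Longrightarrow> Sd d -` A \<inter> {0..1} \<in> sets RB"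
proof -
  assume "A \<in> sets RB"
  then have "A \<in> sets borel" by (simp add: sets_RB_iff)
  then have "Sd d -` A \<in> sets borel" using measurable_sets_borel[OF Sd_borel, of A d] by simp
  then show ?thesis by (auto simp: sets_RB_iff)
qed

definition SP :: "real \<Rightarrow> bool stream measure" where
  "SP p = stream_space (measure_pmf (bernoulli_pmf (1 - p)))"

definition nu :: "real \<Rightarrow> real measure" where
  "nu p = distr (SP p) RB Xs"

lemma Xs_RB[measurable]: "Xs \<in> measurable (SP p) RB"
  unfolding SP_def
  by (rule measurable_restrict_space2) (auto simp: Xs_nonneg Xs_le1)

lemma prob_SP: "prob_space (SP p)"
  unfolding SP_def by (rule prob_space.prob_space_stream_space) (rule prob_space_measure_pmf)

lemma space_nu: "space (nu p) = {0..1}" by (simp add: nu_def space_restrict_space)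
lemma sets_nu: "sets (nu p) = sets RB" by (simp add: nu_def)

lemma nu_is_mu:
  assumes p: "0 < p" "p < 1"
  shows "is_mu p (nu p)"
  unfolding is_mu_def
proof (intro conjI ballI)
  show "prob_space (nu p)" unfolding nu_def
    by (intro prob_space.prob_space_distr prob_SP) simp
  show "space (nu p) = {0..1}" by (rule space_nu)
  show "sets (nu p) = sets RB" by (rule sets_nu)
  fix A assume A: "A \<in> sets (nu p)"
  then have A': "A \<in> sets RB" by (simp add: sets_nu)
  have em: "emeasure (nu p) B = (\<integral>\<^sup>+w. indicator B (Xs w) \<partial>SP p)" if "B \<in> sets RB" for B
  proof -
    have "emeasure (nu p) B = (\<integral>\<^sup>+y. indicator B y \<partial>nu p)"
      using that by (simp add: sets_nu)
    also have "\<dots> = (\<integral>\<^sup>+w. indicator B (Xs w) \<partial>SP p)"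
      unfolding nu_def using that by (subst nn_integral_distr) auto
    finally show ?thesis .
  qed
  have ind: "indicator A (Sd d (Xs w)) = (indicator (Sd d -` A \<inter> {0..1}) (Xs w) :: ennreal)" for d w
    using Xs_nonneg[of w] Xs_le1[of w] by (auto split: split_indicator)
  have "emeasure (nu p) A = (\<integral>\<^sup>+w. indicator A (Xs w) \<partial>SP p)" by (rule em[OF A'])
  also have "\<dots> = (\<integral>\<^sup>+b. (\<integral>\<^sup>+w. indicator A (Xs (b ## w)) \<partial>SP p) \<partial>measure_pmf (bernoulli_pmf (1 - p)))"
    unfolding SP_def
    by (rule prob_space.nn_integral_stream_space[OF prob_space_measure_pmf])
       (use A' Xs_RB[unfolded SP_def] in measurable)
  also have "\<dots> = (\<integral>\<^sup>+b. emeasure (nu p) (Sd (dg b) -` A \<inter> {0..1}) \<partial>measure_pmf (bernoulli_pmf (1 - p)))"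
    by (intro nn_integral_cong) (simp add: Xs_Stream ind em[OF Sd_pre_sets[OF A']])
  also have "\<dots> = ennreal p * emeasure (nu p) (Sd 0 -` A \<inter> {0..1}) + ennreal (1 - p) * emeasure (nu p) (Sd 2 -` A \<inter> {0..1})"
    using p by (simp add: dg_def mult.commute add.commute)
  finally show "emeasure (nu p) A = ennreal p * emeasure (nu p) (Sd 0 -` A \<inter> {0..1}) + ennreal (1 - p) * emeasure (nu p) (Sd 2 -` A \<inter> {0..1})" .
qed


lemma is_mu_measure_eq:
  assumes M: "is_mu p M" and p: "0 < p" "p < 1" and A: "A \<in> sets RB"
  shows "measure M A = p * measure M (Sd 0 -` A \<inter> {0..1}) + (1 - p) * measure M (Sd 2 -` A \<inter> {0..1})"
proof -
  interpret prob_space M using M by (simp add: is_mu_def)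
  have sM: "sets M = sets RB" using M by (simp add: is_mu_def)
  have e: "emeasure M A = ennreal p * emeasure M (Sd 0 -` A \<inter> {0..1}) + ennreal (1 - p) * emeasure M (Sd 2 -` A \<inter> {0..1})"
    using M A by (simp add: is_mu_def)
  then have "ennreal (measure M A) = ennreal (p * measure M (Sd 0 -` A \<inter> {0..1}) + (1 - p) * measure M (Sd 2 -` A \<inter> {0..1}))"
    using p by (simp add: emeasure_eq_measure ennreal_mult ennreal_plus[symmetric])
  then show ?thesis using p by (subst (asm) ennreal_inj) auto
qed

definition FF :: "real measure \<Rightarrow> real \<Rightarrow> real" where
  "FF M t = measure M ({0..1} \<inter> {..t})"

lemma FF_rec:
  assumes M: "is_mu p M" and p: "0 < p" "p < 1"
  shows "FF M t = p * FF M (3 * t) + (1 - p) * FF M (3 * t - 2)"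
proof -
  have A: "{0..1} \<inter> {..t} \<in> sets RB" by (auto simp: sets_RB_iff)
  have 0: "Sd 0 -` ({0..1} \<inter> {..t}) \<inter> {0..1} = {0..1} \<inter> {..3*t}" by (auto simp: Sd_def)
  have 2: "Sd 2 -` ({0..1} \<inter> {..t}) \<inter> {0..1} = {0..1} \<inter> {..3*t-2}" by (auto simp: Sd_def)
  show ?thesis using is_mu_measure_eq[OF M p A] unfolding FF_def 0 2 by simp
qed

lemma FF_low: "t < 0 \<Longrightarrow> FF M t = 0" by (simp add: FF_def)

lemma FF_high:
  assumes M: "is_mu p M" and "1 \<le> t" shows "FF M t = 1"
proof -
  interpret prob_space M using M by (simp add: is_mu_def)
  have "{0..1} \<inter> {..t} = space M" using M assms(2) by (auto simp: is_mu_def)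
  then show ?thesis by (simp add: FF_def prob_space)
qed

lemma FF_bounds:
  assumes M: "is_mu p M" shows "0 \<le> FF M t" "FF M t \<le> 1"
proof -
  interpret prob_space M using M by (simp add: is_mu_def)
  show "0 \<le> FF M t" by (simp add: FF_def)
  show "FF M t \<le> 1" by (simp add: FF_def)
qed

lemma FF_unique:
  assumes M1: "is_mu p M1" and M2: "is_mu p M2" and p: "0 < p" "p < 1"
  shows "FF M1 t = FF M2 t"
proof -
  define D where "D t = FF M1 t - FF M2 t" for t
  define c where "c = max p (1 - p)"
  have c: "0 \<le> c" "c < 1" "p \<le> c" "1 - p \<le> c" using p by (auto simp: c_def)
  have D0: "D t = 0" if "t < 0 \<or> 1 \<le> t" for t
    using that FF_low FF_high[OF M1] FF_high[OF M2] by (auto simp: D_def)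
  have Drec: "D t = p * D (3*t) + (1 - p) * D (3*t - 2)" for t
    using FF_rec[OF M1 p, of t] FF_rec[OF M2 p, of t] by (simp add: D_def algebra_simps)
  have bound: "\<bar>D t\<bar> \<le> c ^ n" for n t
  proof (induction n arbitrary: t)
    case 0 then show ?case using FF_bounds[OF M1, of t] FF_bounds[OF M2, of t] by (simp add: D_def)
  next
    case (Suc n)
    show ?case
    proof (cases "t < 0 \<or> 1 \<le> t")
      case True then show ?thesis using D0 c by simp
    next
      case False
      show ?thesis
      proof (cases "t < 1/3")
        case True
        then have "D t = p * D (3*t)" using Drec[of t] D0[of "3*t-2"] by simp
        then have "\<bar>D t\<bar> = p * \<bar>D (3*t)\<bar>" using p by (simp add: abs_mult)
        also have "\<dots> \<le> c * c ^ n" using Suc.IH[of "3*t"] c p by (intro mult_mono) auto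
        finally show ?thesis by simp
      next
        case False
        then have "D t = (1 - p) * D (3*t - 2)" using Drec[of t] D0[of "3*t"] by simp
        then have "\<bar>D t\<bar> = (1 - p) * \<bar>D (3*t - 2)\<bar>" using p by (simp add: abs_mult)
        also have "\<dots> \<le> c * c ^ n" using Suc.IH[of "3*t-2"] c p by (intro mult_mono) auto
        finally show ?thesis by simp
      qed
    qed
  qed
  have "D t = 0"
  proof (rule ccontr)
    assume "D t \<noteq> 0"
    then have "0 < \<bar>D t\<bar>" by simp
    then obtain n where "c ^ n < \<bar>D t\<bar>" using real_arch_pow_inv c by blast
    with bound[of t n] show False by simp
  qed
  then show ?thesis by (simp add: D_def)
qed

lemma is_mu_unique:
  assumes M1: "is_mu p M1" and M2: "is_mu p M2" and p: "0 < p" "p < 1"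
  shows "M1 = M2"
proof -
  interpret P1: prob_space M1 using M1 by (simp add: is_mu_def)
  interpret P2: prob_space M2 using M2 by (simp add: is_mu_def)
  have s1: "sets M1 = sets RB" and s2: "sets M2 = sets RB" using M1 M2 by (auto simp: is_mu_def)
  have sp1: "space M1 = {0..1}" and sp2: "space M2 = {0..1}" using M1 M2 by (auto simp: is_mu_def)
  have idRB: "(\<lambda>x. x) \<in> measurable RB borel" by (rule measurable_restrict_space1) simp
  have id1: "(\<lambda>x. x) \<in> measurable M1 borel"
    using idRB measurable_cong_sets[OF s1 refl, of borel] by metis
  have id2: "(\<lambda>x. x) \<in> measurable M2 borel"
    using idRB measurable_cong_sets[OF s2 refl, of borel] by metis
  define N1 where "N1 = distr M1 borel (\<lambda>x. x)"
  define N2 where "N2 = distr M2 borel (\<lambda>x. x)"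
  have rd1: "real_distribution N1" unfolding N1_def real_distribution_def real_distribution_axioms_def
    using P1.prob_space_distr[OF id1] by simp
  have rd2: "real_distribution N2" unfolding N2_def real_distribution_def real_distribution_axioms_def
    using P2.prob_space_distr[OF id2] by simp
  have "cdf N1 = cdf N2"
  proof
    fix t
    have "cdf N1 t = FF M1 t" unfolding cdf_def N1_def FF_def
      using id1 by (subst measure_distr) (auto simp: sp1 Int_commute)
    also have "\<dots> = FF M2 t" by (rule FF_unique[OF M1 M2 p])
    also have "\<dots> = cdf N2 t" unfolding cdf_def N2_def FF_def
      using id2 by (subst measure_distr) (auto simp: sp2 Int_commute)
    finally show "cdf N1 t = cdf N2 t" .
  qed
  then have N: "N1 = N2" by (rule cdf_unique[OF rd1 rd2])
  show ?thesis
  proof (rule measure_eqI)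
    show "sets M1 = sets M2" using s1 s2 by simp
    fix A assume A: "A \<in> sets M1"
    then have Ab: "A \<in> sets borel" and Asub: "A \<subseteq> {0..1}" using s1 by (auto simp: sets_RB_iff)
    have "emeasure M1 A = emeasure N1 A" unfolding N1_def
      using id1 Ab Asub by (subst emeasure_distr) (auto simp: sp1 Int_absorb2)
    also have "\<dots> = emeasure N2 A" by (simp add: N)
    also have "\<dots> = emeasure M2 A" unfolding N2_def
      using id2 Ab Asub by (subst emeasure_distr) (auto simp: sp2 Int_absorb2)
    finally show "emeasure M1 A = emeasure M2 A" .
  qed
qed

lemma mu_is_mu:
  assumes p: "0 < p" "p < 1"
  shows "is_mu p (mu p)"
proof -
  have "\<exists>!M. is_mu p M" using nu_is_mu[OF p] is_mu_unique[OF _ _ p] by blast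
  then show ?thesis unfolding mu_def by (rule theI')
qed

lemma mu_eq_nu: "0 < p \<Longrightarrow> p < 1 \<Longrightarrow> mu p = nu p"
  using is_mu_unique mu_is_mu nu_is_mu by blast


lemma words_of_len_Suc: "u \<in> words_of_len (Suc n) \<longleftrightarrow> (\<exists>d v. u = d # v \<and> d \<in> {0,2} \<and> v \<in> words_of_len n)"
  by (cases u) (auto simp: words_of_len_def)

lemma finite_words_of_len: "finite (words_of_len n)"
proof -
  have "words_of_len n = {xs. set xs \<subseteq> {0,2::nat} \<and> length xs = n}" by (auto simp: words_of_len_def)
  then show ?thesis by (simp add: finite_lists_length_eq)
qed

lemma Sd_range: "d \<in> {0,2} \<Longrightarrow> y \<in> {0..1} \<Longrightarrow> Sd d y \<in> {real d/3..(real d+1)/3}"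
  by (auto simp: Sd_def)

lemma Sd_01: "d \<in> {0,2} \<Longrightarrow> y \<in> {0..1} \<Longrightarrow> Sd d y \<in> {0..1}"
  by (auto simp: Sd_def)

lemma Sd_sep: "d \<in> {0,2} \<Longrightarrow> e \<in> {0,2} \<Longrightarrow> a \<in> {0..1} \<Longrightarrow> b \<in> {0..1} \<Longrightarrow> Sd d a = Sd e b \<Longrightarrow> d = e \<and> a = b"
  by (auto simp: Sd_def)

lemma Sd_inj: "Sd d a = Sd d b \<longleftrightarrow> a = b" by (auto simp: Sd_def)

lemma Sw_01: "set u \<subseteq> {0,2} \<Longrightarrow> y \<in> {0..1} \<Longrightarrow> Sw u y \<in> {0..1}"
proof (induction u)
  case Nil then show ?case by simp
next
  case (Cons d u) then show ?case using Sd_01[of d "Sw u y"] by simp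
qed

lemma Sw_sep: "length u = length v \<Longrightarrow> set u \<subseteq> {0,2} \<Longrightarrow> set v \<subseteq> {0,2} \<Longrightarrow> a \<in> {0..1} \<Longrightarrow> b \<in> {0..1}
   \<Longrightarrow> Sw u a = Sw v b \<Longrightarrow> u = v"
proof (induction u arbitrary: v)
  case Nil then show ?case by simp
next
  case (Cons d u)
  then obtain e v' where v: "v = e # v'" by (cases v) auto
  have "d = e \<and> Sw u a = Sw v' b"
    using Cons.prems v Sw_01[of u a] Sw_01[of v' b] by (intro Sd_sep[of d e]) auto
  then show ?case using Cons v by auto
qed

lemma Sd_cont: "continuous_on S (Sd d)"
  unfolding Sd_def by (intro continuous_intros) auto

lemma Sw_cont: "continuous_on S (Sw u)"
proof (induction u arbitrary: S)
  case Nil then show ?case by (simp add: continuous_on_id)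
next
  case (Cons d u) then show ?case
    using continuous_on_compose[OF Cons.IH Sd_cont] by simp
qed

definition UL :: "nat \<Rightarrow> real set" where
  "UL n = (\<Union>w\<in>words_of_len n. Sw w ` {0..1})"

lemma Cantor_UL: "Cantor = (\<Inter>n. UL n)" by (simp add: Cantor_def UL_def)

lemma UL_0: "UL 0 = {0..1}" by (simp add: UL_def words_of_len_def)

lemma UL_sub: "UL n \<subseteq> {0..1}"
  unfolding UL_def words_of_len_def using Sw_01 by blast

lemma UL_compact: "compact (UL n)"
  unfolding UL_def
  by (intro compact_UN finite_words_of_len compact_continuous_image Sw_cont compact_Icc)

lemma Cantor_sub: "Cantor \<subseteq> {0..1}" using UL_0 Cantor_UL by auto

lemma Cantor_compact: "compact Cantor"
proof -
  have "closed Cantor" unfolding Cantor_UL by (intro closed_INT ballI compact_imp_closed UL_compact)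
  moreover have "bounded Cantor" using Cantor_sub bounded_subset[OF bounded_closed_interval] by blast
  ultimately show ?thesis by (simp add: compact_eq_bounded_closed)
qed

lemma Sd_UL: "d \<in> {0,2} \<Longrightarrow> x \<in> UL n \<Longrightarrow> Sd d x \<in> UL (Suc n)"
proof -
  assume d: "d \<in> {0,2}" and "x \<in> UL n"
  then obtain w y where w: "w \<in> words_of_len n" "y \<in> {0..1}" "x = Sw w y" by (auto simp: UL_def)
  then have "d # w \<in> words_of_len (Suc n)" using d by (auto simp: words_of_len_def)
  then show ?thesis using w unfolding UL_def by force
qed

lemma Sd_Cantor: "d \<in> {0,2} \<Longrightarrow> x \<in> Cantor \<Longrightarrow> Sd d x \<in> Cantor"
proof -
  assume d: "d \<in> {0,2}" and x: "x \<in> Cantor"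
  have "Sd d x \<in> UL n" for n
  proof (cases n)
    case 0 then show ?thesis using Sd_01[OF d] x Cantor_sub UL_0 by auto
  next
    case (Suc m)
    have "x \<in> UL m" using x Cantor_UL by auto
    then show ?thesis using Sd_UL[OF d] Suc by auto
  qed
  then show ?thesis using Cantor_UL by auto
qed

lemma Cw_Nil[simp]: "Cw [] = Cantor" by (simp add: Cw_def)
lemma Cw_Cons: "Cw (d # u) = Sd d ` Cw u" by (simp add: Cw_def image_comp)

lemma Cw_sub_Sw: "Cw u \<subseteq> Sw u ` {0..1}" using Cantor_sub by (auto simp: Cw_def)

lemma Cw_01: "set u \<subseteq> {0,2} \<Longrightarrow> Cw u \<subseteq> {0..1}"
  using Cw_sub_Sw Sw_01 by blast

lemma Cw_compact: "compact (Cw u)"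
  unfolding Cw_def by (intro compact_continuous_image Sw_cont Cantor_compact)

lemma Cw_sets: "set u \<subseteq> {0,2} \<Longrightarrow> Cw u \<in> sets RB"
  using Cw_01 borel_closed[OF compact_imp_closed[OF Cw_compact]] by (auto simp: sets_RB_iff)

lemma Cantor_sets: "Cantor \<in> sets RB" using Cw_sets[of "[]"] by simp

lemma Cw_disj: "u \<in> words_of_len n \<Longrightarrow> v \<in> words_of_len n \<Longrightarrow> x \<in> Cw u \<Longrightarrow> x \<in> Cw v \<Longrightarrow> u = v"
proof -
  assume u: "u \<in> words_of_len n" and v: "v \<in> words_of_len n" and "x \<in> Cw u" "x \<in> Cw v"
  then obtain a b where "a \<in> {0..1}" "b \<in> {0..1}" "x = Sw u a" "x = Sw v b"
    using Cw_sub_Sw by blast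
  then show "u = v" using u v by (intro Sw_sep[of u v a b]) (auto simp: words_of_len_def)
qed

lemma Cw_Cons_sep: "d \<in> {0,2} \<Longrightarrow> e \<in> {0,2} \<Longrightarrow> d \<noteq> e \<Longrightarrow> set v \<subseteq> {0,2} \<Longrightarrow> y \<in> {0..1} \<Longrightarrow> Sd e y \<notin> Cw (d # v)"
proof
  assume d: "d \<in> {0,2}" and e: "e \<in> {0,2}" and de: "d \<noteq> e" and v: "set v \<subseteq> {0,2}" and y: "y \<in> {0..1}"
    and "Sd e y \<in> Cw (d # v)"
  then obtain x where x: "x \<in> Cw v" "Sd e y = Sd d x" by (auto simp: Cw_Cons)
  then have "x \<in> {0..1}" using Cw_01[OF v] by auto
  then show False using Sd_sep[OF e d y _ x(2)] de by auto
qed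


definition pd :: "real \<Rightarrow> nat \<Rightarrow> real" where "pd p d = (if d = 0 then p else 1 - p)"

locale cp =
  fixes p :: real
  assumes p0: "0 < p" and p1: "p < 1"
begin

abbreviation "M \<equiv> mu p"
definition "cc = max p (1 - p)"

lemma M_is_mu: "is_mu p M" using mu_is_mu p0 p1 by blast

sublocale P: prob_space M using M_is_mu by (simp add: is_mu_def)

lemma sets_M[measurable_cong]: "sets M = sets RB" using M_is_mu by (simp add: is_mu_def)
lemma space_M: "space M = {0..1}" using M_is_mu by (simp add: is_mu_def)

lemma cc: "0 \<le> cc" "cc < 1" "p \<le> cc" "1 - p \<le> cc" "0 < cc" using p0 p1 by (auto simp: cc_def)

lemma pd: "d \<in> {0,2} \<Longrightarrow> 0 < pd p d \<and> pd p d \<le> cc" using p0 p1 cc by (auto simp: pd_def)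

lemma meas_eq: "A \<in> sets RB \<Longrightarrow> measure M A = p * measure M (Sd 0 -` A \<inter> {0..1}) + (1 - p) * measure M (Sd 2 -` A \<inter> {0..1})"
  using is_mu_measure_eq[OF M_is_mu p0 p1] .

lemma measure_Sd_image:
  assumes d: "d \<in> {0,2}" and A: "A \<in> sets RB" and B: "Sd d ` A \<in> sets RB"
  shows "measure M (Sd d ` A) = pd p d * measure M A"
proof -
  have Asub: "A \<subseteq> {0..1}" using A by (simp add: sets_RB_iff)
  have same: "Sd d -` (Sd d ` A) \<inter> {0..1} = A" using Asub by (auto simp: Sd_inj)
  have other: "Sd e -` (Sd d ` A) \<inter> {0..1} = {}" if "e \<in> {0,2}" "e \<noteq> d" for e
    using Sd_sep[OF d that(1)] Asub that(2) by fastforce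
  show ?thesis using d meas_eq[OF B] same other[of 0] other[of 2] by (auto simp: pd_def)
qed

lemma measure_Cw: "set u \<subseteq> {0,2} \<Longrightarrow> measure M (Cw u) \<le> cc ^ length u"
proof (induction u)
  case Nil then show ?case by simp
next
  case (Cons d u)
  then have d: "d \<in> {0,2}" and u: "set u \<subseteq> {0,2}" by auto
  have "measure M (Cw (d # u)) = pd p d * measure M (Cw u)"
    unfolding Cw_Cons using Cw_sets[OF u] Cw_sets[of "d # u"] d u
    by (intro measure_Sd_image) (auto simp: Cw_Cons)
  also have "\<dots> \<le> cc * cc ^ length u" using pd[OF d] Cons.IH[OF u] by (intro mult_mono) auto
  finally show ?case by simp
qed

lemma UL_sets: "UL n \<in> sets RB"
  using UL_sub borel_closed[OF compact_imp_closed[OF UL_compact]] by (auto simp: sets_RB_iff)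

lemma measure_UL: "measure M (UL n) = 1"
proof (induction n)
  case 0 then show ?case using P.prob_space space_M by (simp add: UL_0)
next
  case (Suc n)
  have ge: "measure M (Sd d -` UL (Suc n) \<inter> {0..1}) = 1" if d: "d \<in> {0,2}" for d
  proof (rule antisym)
    show "measure M (Sd d -` UL (Suc n) \<inter> {0..1}) \<le> 1" by (rule P.prob_le_1)
    have "UL n \<subseteq> Sd d -` UL (Suc n) \<inter> {0..1}" using Sd_UL[OF d] UL_sub by auto
    then have "measure M (UL n) \<le> measure M (Sd d -` UL (Suc n) \<inter> {0..1})"
      using UL_sets Sd_pre_sets[OF UL_sets] by (intro P.finite_measure_mono) (auto simp: sets_M)
    then show "1 \<le> measure M (Sd d -` UL (Suc n) \<inter> {0..1})" using Suc by simp
  qed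
  show ?case using meas_eq[OF UL_sets] ge[of 0] ge[of 2] by simp
qed

lemma AE_Cantor: "AE x in M. x \<in> Cantor"
proof -
  have "AE x in M. x \<in> UL n" for n
    using measure_UL[of n] UL_sets[of n] by (subst P.AE_in_set_eq_1) (auto simp: sets_M)
  then have "AE x in M. \<forall>n. x \<in> UL n" by (simp add: AE_all_countable)
  then show ?thesis by (simp add: Cantor_UL)
qed

lemma measure_Cantor: "measure M Cantor = 1"
  using AE_Cantor Cantor_sets by (subst P.AE_in_set_eq_1[symmetric]) (auto simp: sets_M)

abbreviation "BB \<equiv> measure_pmf (bernoulli_pmf (1 - p))"
definition "TT = (\<lambda>(b, x). Sd (dg b) x)"

lemma TT_meas[measurable]: "TT \<in> measurable (BB \<Otimes>\<^sub>M M) M"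
proof -
  have idM: "(\<lambda>x. x) \<in> borel_measurable M"
    using measurable_restrict_space1[OF measurable_ident_sets[OF refl], of borel "{0..1::real}"]
      measurable_cong_sets[OF sets_M refl, of borel] by (simp add: id_def)
  have sb: "(\<lambda>z. snd z) \<in> borel_measurable (BB \<Otimes>\<^sub>M M)"
    by (rule measurable_compose[OF measurable_snd idM])
  have db: "(\<lambda>b. real (dg b)) \<in> borel_measurable BB" by simp
  have fb: "(\<lambda>z. real (dg (fst z))) \<in> borel_measurable (BB \<Otimes>\<^sub>M M)"
    by (rule measurable_compose[OF measurable_fst db])
  have "(\<lambda>z. Sd (dg (fst z)) (snd z)) \<in> borel_measurable (BB \<Otimes>\<^sub>M M)"
    unfolding Sd_def using sb fb by (intro borel_measurable_divide borel_measurable_add) auto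
  then have m: "TT \<in> borel_measurable (BB \<Otimes>\<^sub>M M)"
    by (simp add: TT_def case_prod_beta')
  have "TT \<in> measurable (BB \<Otimes>\<^sub>M M) RB"
    by (rule measurable_restrict_space2[OF _ m])
       (auto simp: TT_def space_pair_measure space_M dg_def Sd_def)
  then show ?thesis using measurable_cong_sets[OF refl sets_M] by metis
qed

lemma Sd_meas[measurable]: "d \<in> {0,2} \<Longrightarrow> Sd d \<in> measurable M M"
proof -
  assume d: "d \<in> {0,2}"
  have "Sd d \<in> measurable M RB"
  proof (rule measurable_restrict_space2)
    show "Sd d \<in> space M \<rightarrow> {0..1}" using Sd_01[OF d] by (auto simp: space_M)
    have "Sd d \<in> borel_measurable RB" by (rule measurable_restrict_space1[OF Sd_borel])
    then show "Sd d \<in> borel_measurable M" using measurable_cong_sets[OF sets_M refl, of borel] by metis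
  qed
  then show ?thesis using measurable_cong_sets[OF refl sets_M] by metis
qed

interpretation PS: pair_sigma_finite BB M
  by (intro pair_sigma_finite.intro) (auto intro: prob_space_imp_sigma_finite prob_space_measure_pmf P.prob_space_axioms)

lemma M_distr: "M = distr (BB \<Otimes>\<^sub>M M) M TT"
proof (rule measure_eqI)
  show "sets M = sets (distr (BB \<Otimes>\<^sub>M M) M TT)" by simp
  fix A assume A: "A \<in> sets M"
  have AR: "A \<in> sets RB" using A sets_M by simp
  have "emeasure (distr (BB \<Otimes>\<^sub>M M) M TT) A = emeasure (BB \<Otimes>\<^sub>M M) (TT -` A \<inter> space (BB \<Otimes>\<^sub>M M))"
    using A by (subst emeasure_distr) auto
  also have "\<dots> = (\<integral>\<^sup>+b. emeasure M (Pair b -` (TT -` A \<inter> space (BB \<Otimes>\<^sub>M M))) \<partial>BB)"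
    using A by (intro P.emeasure_pair_measure_alt) (auto intro: measurable_sets)
  also have "\<dots> = (\<integral>\<^sup>+b. emeasure M (Sd (dg b) -` A \<inter> {0..1}) \<partial>BB)"
    by (intro nn_integral_cong arg_cong[where f="emeasure M"]) (auto simp: TT_def space_pair_measure space_M)
  also have "\<dots> = ennreal p * emeasure M (Sd 0 -` A \<inter> {0..1}) + ennreal (1 - p) * emeasure M (Sd 2 -` A \<inter> {0..1})"
    using p0 p1 by (simp add: dg_def mult.commute add.commute)
  also have "\<dots> = emeasure M A" using M_is_mu A by (simp add: is_mu_def)
  finally show "emeasure M A = emeasure (distr (BB \<Otimes>\<^sub>M M) M TT) A" by simp
qed

lemma integral_selfsim:
  fixes h :: "real \<Rightarrow> 'b::{banach,second_countable_topology}"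
  assumes h: "integrable M h"
  shows "integrable M (\<lambda>x. h (Sd 0 x))" "integrable M (\<lambda>x. h (Sd 2 x))"
    "(\<integral>x. h x \<partial>M) = p *\<^sub>R (\<integral>x. h (Sd 0 x) \<partial>M) + (1 - p) *\<^sub>R (\<integral>x. h (Sd 2 x) \<partial>M)"
proof -
  have hm[measurable]: "h \<in> borel_measurable M" using h by simp
  have i2: "integrable (BB \<Otimes>\<^sub>M M) (\<lambda>z. h (TT z))"
    using h by (subst integrable_distr_eq[symmetric, OF TT_meas hm]) (simp add: M_distr[symmetric])
  have "AE b in BB. integrable M (\<lambda>x. h (TT (b, x)))" by (rule PS.AE_integrable_fst'[OF i2])
  then have ib: "integrable M (\<lambda>x. h (Sd (dg b) x))" for b
    using p0 p1 by (simp add: AE_measure_pmf_iff TT_def)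
  show "integrable M (\<lambda>x. h (Sd 0 x))" using ib[of False] by (simp add: dg_def)
  show "integrable M (\<lambda>x. h (Sd 2 x))" using ib[of True] by (simp add: dg_def)
  have "(\<integral>x. h x \<partial>M) = (\<integral>z. h (TT z) \<partial>(BB \<Otimes>\<^sub>M M))"
    by (subst M_distr) (rule integral_distr[OF TT_meas hm])
  also have "\<dots> = (\<integral>b. (\<integral>x. h (TT (b, x)) \<partial>M) \<partial>BB)"
    by (rule PS.integral_fst'[OF i2, symmetric])
  also have "\<dots> = (\<Sum>b\<in>UNIV. pmf (bernoulli_pmf (1 - p)) b *\<^sub>R (\<integral>x. h (TT (b, x)) \<partial>M))"
    by (rule integral_measure_pmf) auto
  also have "\<dots> = p *\<^sub>R (\<integral>x. h (Sd 0 x) \<partial>M) + (1 - p) *\<^sub>R (\<integral>x. h (Sd 2 x) \<partial>M)"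
    using p0 p1 by (simp add: UNIV_bool TT_def dg_def)
  finally show "(\<integral>x. h x \<partial>M) = p *\<^sub>R (\<integral>x. h (Sd 0 x) \<partial>M) + (1 - p) *\<^sub>R (\<integral>x. h (Sd 2 x) \<partial>M)" .
qed

end

lemma CS_real:
  fixes g h :: "'a \<Rightarrow> real"
  assumes [measurable]: "g \<in> borel_measurable M" "h \<in> borel_measurable M"
    and ig: "integrable M (\<lambda>x. (g x)\<^sup>2)" and ih: "integrable M (\<lambda>x. (h x)\<^sup>2)"
    and igh: "integrable M (\<lambda>x. g x * h x)"
    and g0: "\<And>x. 0 \<le> g x" and h0: "\<And>x. 0 \<le> h x"
  shows "(\<integral>x. g x * h x \<partial>M)\<^sup>2 \<le> (\<integral>x. (g x)\<^sup>2 \<partial>M) * (\<integral>x. (h x)\<^sup>2 \<partial>M)"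
proof -
  have cs: "(\<integral>\<^sup>+x. ennreal (g x) * ennreal (h x) \<partial>M)\<^sup>2 \<le> (\<integral>\<^sup>+x. ennreal (g x) ^ 2 \<partial>M) * (\<integral>\<^sup>+x. ennreal (h x) ^ 2 \<partial>M)"
    by (rule Cauchy_Schwarz_nn_integral) auto
  have e1: "(\<integral>\<^sup>+x. ennreal (g x) * ennreal (h x) \<partial>M) = ennreal (\<integral>x. g x * h x \<partial>M)"
    using g0 h0 by (simp add: ennreal_mult[symmetric] nn_integral_eq_integral[OF igh])
  have "(\<lambda>x. ennreal (g x) ^ 2) = (\<lambda>x. ennreal ((g x)\<^sup>2))" using g0 by (simp add: ennreal_power)
  then have e2: "(\<integral>\<^sup>+x. ennreal (g x) ^ 2 \<partial>M) = ennreal (\<integral>x. (g x)\<^sup>2 \<partial>M)"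
    using nn_integral_eq_integral[OF ig] by simp
  have "(\<lambda>x. ennreal (h x) ^ 2) = (\<lambda>x. ennreal ((h x)\<^sup>2))" using h0 by (simp add: ennreal_power)
  then have e3: "(\<integral>\<^sup>+x. ennreal (h x) ^ 2 \<partial>M) = ennreal (\<integral>x. (h x)\<^sup>2 \<partial>M)"
    using nn_integral_eq_integral[OF ih] by simp
  have nn: "0 \<le> (\<integral>x. (g x)\<^sup>2 \<partial>M)" "0 \<le> (\<integral>x. (h x)\<^sup>2 \<partial>M)" "0 \<le> (\<integral>x. g x * h x \<partial>M)"
    using g0 h0 by (auto intro!: integral_nonneg_AE)
  from cs have "ennreal ((\<integral>x. g x * h x \<partial>M)\<^sup>2) \<le> ennreal ((\<integral>x. (g x)\<^sup>2 \<partial>M) * (\<integral>x. (h x)\<^sup>2 \<partial>M))"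
    unfolding e1 e2 e3 using nn by (simp add: ennreal_power ennreal_mult)
  then show ?thesis using nn by (subst (asm) ennreal_le_iff) auto
qed

lemma ind_sq: "(indicator A x :: real)\<^sup>2 = indicator A x"
  by (simp split: split_indicator)

lemma cnj_indicator[simp]: "cnj (indicator S x :: complex) = indicator S x"
  by (simp split: split_indicator)

context cp begin

lemma L2_iff: "f \<in> L2 p \<longleftrightarrow> f \<in> borel_measurable M \<and> integrable M (\<lambda>x. (cmod (f x))\<^sup>2)"
  by (simp add: L2_def)

lemma L2_integrable: "f \<in> L2 p \<Longrightarrow> integrable M f"
proof -
  assume f: "f \<in> L2 p"
  then have [measurable]: "f \<in> borel_measurable M" by (simp add: L2_iff)
  have "integrable M (\<lambda>x. norm (f x ^ 2))" using f by (simp add: L2_iff norm_power)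
  then have "integrable M (\<lambda>x. f x ^ 2)" by (subst (asm) integrable_norm_iff) auto
  then show "integrable M f" by (rule P.square_integrable_imp_integrable[rotated]) simp
qed

lemma L2norm_nonneg: "0 \<le> L2norm p f" by (simp add: L2norm_def)

lemma CS_ind:
  assumes f: "f \<in> L2 p" and A: "A \<in> sets M"
  shows "integrable M (\<lambda>x. indicator A x * f x)"
    "cmod (\<integral>x. indicator A x * f x \<partial>M) \<le> sqrt (measure M A) * L2norm p f"
proof -
  have [measurable]: "f \<in> borel_measurable M" using f by (simp add: L2_iff)
  have fi: "integrable M f" by (rule L2_integrable[OF f])
  show ii: "integrable M (\<lambda>x. indicator A x * f x)"
    by (rule Bochner_Integration.integrable_bound[OF fi]) (use A in \<open>auto split: split_indicator\<close>)
  have "cmod (\<integral>x. indicator A x * f x \<partial>M) \<le> (\<integral>x. norm (indicator A x * f x) \<partial>M)"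
    by (rule integral_norm_bound)
  also have "\<dots> = (\<integral>x. cmod (f x) * indicator A x \<partial>M)"
    by (intro Bochner_Integration.integral_cong) (auto split: split_indicator)
  finally have le1: "cmod (\<integral>x. indicator A x * f x \<partial>M) \<le> (\<integral>x. cmod (f x) * indicator A x \<partial>M)" .
  have i1: "integrable M (\<lambda>x. cmod (f x) * indicator A x)"
  proof -
    have "(\<lambda>x. norm (indicator A x * f x)) = (\<lambda>x. cmod (f x) * indicator A x)"
      by (auto split: split_indicator)
    then show ?thesis using integrable_norm[OF ii] by simp
  qed
  have i2: "integrable M (\<lambda>x. (indicator A x :: real)\<^sup>2)" using A by (simp add: ind_sq integrable_real_indicator less_top[symmetric])
  have "(\<integral>x. cmod (f x) * indicator A x \<partial>M)\<^sup>2 \<le> (\<integral>x. (cmod (f x))\<^sup>2 \<partial>M) * (\<integral>x. (indicator A x :: real)\<^sup>2 \<partial>M)"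
    using A f i1 i2 by (intro CS_real) (auto simp: L2_iff)
  also have "\<dots> = (L2norm p f)\<^sup>2 * measure M A"
    using A by (simp add: L2norm_def ind_sq integral_nonneg_AE)
  finally have "(\<integral>x. cmod (f x) * indicator A x \<partial>M) \<le> sqrt ((L2norm p f)\<^sup>2 * measure M A)"
    by (rule real_le_rsqrt)
  also have "\<dots> = sqrt (measure M A) * L2norm p f"
    by (simp add: real_sqrt_mult L2norm_nonneg mult.commute)
  finally show "cmod (\<integral>x. indicator A x * f x \<partial>M) \<le> sqrt (measure M A) * L2norm p f"
    using le1 by linarith
qed

end

context cp begin

definition "aa u f = inner_mu p (indicator (Cw u)) f"
definition "LL n f x = (\<Sum>u\<in>words_of_len n. aa u f * indicator (Cw u) x)"
definition "rho = sqrt cc"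
definition "CK = 1 / (1 - rho)"

lemma rho: "0 \<le> rho" "rho < 1" using cc by (auto simp: rho_def)
lemma CK: "0 < CK" using rho by (simp add: CK_def)

lemma aa_int: "aa u f = (\<integral>x. indicator (Cw u) x * f x \<partial>M)"
  by (simp add: aa_def inner_mu_def)

lemma words_upto_UN: "words_upto m = (\<Union>n\<in>{..m}. words_of_len n)"
  by (auto simp: words_upto_def words_of_len_def)

lemma Km_LL: "Km p m f x = (\<Sum>n\<le>m. LL n f x)"
proof -
  have "Km p m f x = (\<Sum>u\<in>(\<Union>n\<in>{..m}. words_of_len n). aa u f * indicator (Cw u) x)"
    by (simp add: Km_def aa_def words_upto_UN)
  also have "\<dots> = (\<Sum>n\<le>m. LL n f x)" unfolding LL_def
    by (rule sum.UNION_disjoint) (use finite_words_of_len in \<open>auto simp: words_of_len_def\<close>)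
  finally show ?thesis .
qed

lemma Cw_sets_M: "u \<in> words_of_len n \<Longrightarrow> Cw u \<in> sets M"
  using Cw_sets sets_M by (auto simp: words_of_len_def)

lemma aa_bound:
  assumes f: "f \<in> L2 p" and u: "u \<in> words_of_len n"
  shows "cmod (aa u f) \<le> rho ^ n * L2norm p f"
proof -
  have "cmod (aa u f) \<le> sqrt (measure M (Cw u)) * L2norm p f"
    unfolding aa_int by (rule CS_ind(2)[OF f Cw_sets_M[OF u]])
  also have "\<dots> \<le> rho ^ n * L2norm p f"
  proof (intro mult_right_mono L2norm_nonneg)
    have "measure M (Cw u) \<le> cc ^ n" using measure_Cw[of u] u by (auto simp: words_of_len_def)
    then show "sqrt (measure M (Cw u)) \<le> rho ^ n" by (simp add: rho_def real_sqrt_power[symmetric])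
  qed
  finally show ?thesis .
qed

lemma LL_single: "u \<in> words_of_len n \<Longrightarrow> x \<in> Cw u \<Longrightarrow> LL n f x = aa u f"
proof -
  assume u: "u \<in> words_of_len n" and x: "x \<in> Cw u"
  have "LL n f x = aa u f * indicator (Cw u) x + (\<Sum>v\<in>words_of_len n - {u}. aa v f * indicator (Cw v) x)"
    unfolding LL_def by (rule sum.remove[OF finite_words_of_len u])
  also have "(\<Sum>v\<in>words_of_len n - {u}. aa v f * indicator (Cw v) x) = 0"
    using Cw_disj[OF u _ x] by (intro sum.neutral) (auto split: split_indicator)
  finally show ?thesis using x by simp
qed

lemma LL_none: "(\<forall>u\<in>words_of_len n. x \<notin> Cw u) \<Longrightarrow> LL n f x = 0"
  unfolding LL_def by (intro sum.neutral) auto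

lemma LL_bound_gen:
  assumes "\<And>u. u \<in> words_of_len n \<Longrightarrow> cmod (aa u f) \<le> B" "0 \<le> B"
  shows "cmod (LL n f x) \<le> B"
proof (cases "\<exists>u\<in>words_of_len n. x \<in> Cw u")
  case True
  then obtain u where "u \<in> words_of_len n" "x \<in> Cw u" by blast
  then show ?thesis using LL_single assms by simp
next
  case False then show ?thesis using LL_none assms by simp
qed

lemma LL_bound: assumes f: "f \<in> L2 p" shows "cmod (LL n f x) \<le> rho ^ n * L2norm p f"
proof (rule LL_bound_gen)
  show "\<And>u. u \<in> words_of_len n \<Longrightarrow> cmod (aa u f) \<le> rho ^ n * L2norm p f" by (rule aa_bound[OF f])
  show "0 \<le> rho ^ n * L2norm p f" using rho(1) L2norm_nonneg by simp
qed

lemma geo_rho: "(\<lambda>n. rho ^ n * B) sums (B / (1 - rho))"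
  using sums_mult2[OF geometric_sums[of rho], of B] rho by (simp add: field_simps)

lemma LL_summable: "f \<in> L2 p \<Longrightarrow> summable (\<lambda>n. norm (LL n f x))"
  by (rule summable_comparison_test'[OF sums_summable[OF geo_rho], of 0]) (auto intro: LL_bound)

lemma Kinf_eq: "f \<in> L2 p \<Longrightarrow> Kinf p f x = (\<Sum>n. LL n f x)"
proof -
  assume f: "f \<in> L2 p"
  have s: "summable (\<lambda>n. LL n f x)" by (rule summable_norm_cancel[OF LL_summable[OF f]])
  have "(\<lambda>m. \<Sum>n<Suc m. LL n f x) \<longlonglongrightarrow> (\<Sum>n. LL n f x)"
    using LIMSEQ_Suc[OF summable_LIMSEQ[OF s]] .
  then have "(\<lambda>m. Km p m f x) \<longlonglongrightarrow> (\<Sum>n. LL n f x)"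
    by (simp add: Km_LL lessThan_Suc_atMost)
  then show ?thesis unfolding Kinf_def by (rule limI)
qed

lemma Kinf_fun_eq: "f \<in> L2 p \<Longrightarrow> Kinf p f = (\<lambda>x. \<Sum>n. LL n f x)"
  using Kinf_eq by auto

lemma Kinf_bound: "f \<in> L2 p \<Longrightarrow> cmod (Kinf p f x) \<le> CK * L2norm p f"
proof -
  assume f: "f \<in> L2 p"
  have "cmod (Kinf p f x) = norm (\<Sum>n. LL n f x)" by (simp add: Kinf_eq[OF f])
  also have "\<dots> \<le> (\<Sum>n. norm (LL n f x))" by (rule summable_norm[OF LL_summable[OF f]])
  also have "\<dots> \<le> (\<Sum>n. rho ^ n * L2norm p f)"
    by (intro suminf_le LL_bound[OF f] LL_summable[OF f] sums_summable[OF geo_rho])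
  also have "\<dots> = CK * L2norm p f" using geo_rho by (simp add: sums_iff CK_def)
  finally show ?thesis .
qed

lemma ind_meas: "u \<in> words_of_len n \<Longrightarrow> (indicator (Cw u) :: real \<Rightarrow> complex) \<in> borel_measurable M"
  using Cw_sets_M by (auto intro: borel_measurable_indicator)

lemma LL_meas: "LL n f \<in> borel_measurable M"
proof -
  have "(\<lambda>x. \<Sum>u\<in>words_of_len n. aa u f * indicator (Cw u) x) \<in> borel_measurable M"
    using ind_meas by (intro borel_measurable_sum borel_measurable_times borel_measurable_const) auto
  then show ?thesis by (simp add: LL_def[abs_def])
qed

lemma Kinf_meas: "f \<in> L2 p \<Longrightarrow> Kinf p f \<in> borel_measurable M"
  using LL_meas by (simp add: Kinf_fun_eq borel_measurable_suminf)

lemma bounded_L2: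
  assumes m: "f \<in> borel_measurable M" and b: "\<And>x. x \<in> space M \<Longrightarrow> cmod (f x) \<le> B"
  shows "f \<in> L2 p" "L2norm p f \<le> B"
proof -
  have B0: "0 \<le> B" using b[of 0] by (auto simp: space_M intro: order_trans[OF norm_ge_zero])
  have mm: "(\<lambda>x. (cmod (f x))\<^sup>2) \<in> borel_measurable M" using m by measurable
  have i: "integrable M (\<lambda>x. (cmod (f x))\<^sup>2)"
    by (rule Bochner_Integration.integrable_bound[OF P.integrable_const[of "B^2"] mm])
       (auto intro!: AE_I2 power_mono b simp: B0)
  then show "f \<in> L2 p" using m by (simp add: L2_iff)
  have "(\<integral>x. (cmod (f x))\<^sup>2 \<partial>M) \<le> (\<integral>x. B^2 \<partial>M)"
    by (intro integral_mono_AE i P.integrable_const AE_I2 impI power_mono b) auto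
  then have "(\<integral>x. (cmod (f x))\<^sup>2 \<partial>M) \<le> B^2" by (simp add: P.prob_space)
  then have "sqrt (\<integral>x. (cmod (f x))\<^sup>2 \<partial>M) \<le> sqrt (B^2)" by (rule real_sqrt_le_mono)
  then show "L2norm p f \<le> B" unfolding L2norm_def using B0 by simp
qed

lemma Kinf_L2: "f \<in> L2 p \<Longrightarrow> Kinf p f \<in> L2 p"
  using bounded_L2(1)[OF Kinf_meas Kinf_bound] .

lemma Kinf_L2norm: "f \<in> L2 p \<Longrightarrow> L2norm p (Kinf p f) \<le> CK * L2norm p f"
  using bounded_L2(2)[OF Kinf_meas Kinf_bound] .

end

lemma cmod_add_sq: "(cmod (a + b))\<^sup>2 \<le> 2 * (cmod a)\<^sup>2 + 2 * (cmod b)\<^sup>2"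
proof -
  have "cmod (a + b) \<le> cmod a + cmod b" by (rule norm_triangle_ineq)
  then have "(cmod (a + b))\<^sup>2 \<le> (cmod a + cmod b)\<^sup>2" by (intro power_mono) auto
  also have "\<dots> \<le> 2 * (cmod a)\<^sup>2 + 2 * (cmod b)\<^sup>2"
  proof -
    have "0 \<le> (cmod a - cmod b)\<^sup>2" by simp
    then show ?thesis unfolding power2_sum power2_diff by linarith
  qed
  finally show ?thesis .
qed

context cp begin

lemma L2_meas: "f \<in> L2 p \<Longrightarrow> f \<in> borel_measurable M" by (simp add: L2_iff)

lemma L2_add: "f \<in> L2 p \<Longrightarrow> g \<in> L2 p \<Longrightarrow> (\<lambda>x. f x + g x) \<in> L2 p"
proof -
  assume f: "f \<in> L2 p" and g: "g \<in> L2 p"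
  have [measurable]: "f \<in> borel_measurable M" "g \<in> borel_measurable M" using f g by (auto simp: L2_iff)
  have i: "integrable M (\<lambda>x. 2 * (cmod (f x))\<^sup>2 + 2 * (cmod (g x))\<^sup>2)"
    using f g by (auto simp: L2_iff)
  have "integrable M (\<lambda>x. (cmod (f x + g x))\<^sup>2)"
    by (rule Bochner_Integration.integrable_bound[OF i]) (auto intro!: AE_I2 order_trans[OF cmod_add_sq])
  then show ?thesis by (simp add: L2_iff)
qed

lemma L2_scale: "f \<in> L2 p \<Longrightarrow> (\<lambda>x. c * f x) \<in> L2 p"
proof -
  assume f: "f \<in> L2 p"
  have [measurable]: "f \<in> borel_measurable M" using f by (auto simp: L2_iff)
  have "integrable M (\<lambda>x. (cmod c)\<^sup>2 * (cmod (f x))\<^sup>2)" using f by (auto simp: L2_iff)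
  then show ?thesis by (simp add: L2_iff norm_mult power_mult_distrib)
qed

lemma L2_zero: "(\<lambda>x. 0) \<in> L2 p" by (simp add: L2_iff)

lemma L2_diff: "f \<in> L2 p \<Longrightarrow> g \<in> L2 p \<Longrightarrow> (\<lambda>x. f x - g x) \<in> L2 p"
  using L2_add[of f "\<lambda>x. (-1) * g x"] L2_scale[of g "-1"] by simp

lemma L2_sum: "finite I \<Longrightarrow> (\<And>i. i \<in> I \<Longrightarrow> f i \<in> L2 p) \<Longrightarrow> (\<lambda>x. \<Sum>i\<in>I. f i x) \<in> L2 p"
  by (induction I rule: finite_induct) (auto intro: L2_add L2_zero)

lemma aa_add: "f \<in> L2 p \<Longrightarrow> g \<in> L2 p \<Longrightarrow> u \<in> words_of_len n \<Longrightarrow> aa u (\<lambda>x. f x + g x) = aa u f + aa u g"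
  unfolding aa_int using CS_ind(1)[OF _ Cw_sets_M]
  by (simp add: distrib_left Bochner_Integration.integral_add)

lemma aa_scale: "aa u (\<lambda>x. c * f x) = c * aa u f"
proof -
  have "aa u (\<lambda>x. c * f x) = (\<integral>x. c * (indicator (Cw u) x * f x) \<partial>M)"
    unfolding aa_int by (simp add: ac_simps)
  also have "\<dots> = c * aa u f" unfolding aa_int by (rule integral_mult_right_zero)
  finally show ?thesis .
qed

lemma LL_add: "f \<in> L2 p \<Longrightarrow> g \<in> L2 p \<Longrightarrow> LL n (\<lambda>x. f x + g x) x = LL n f x + LL n g x"
  unfolding LL_def by (simp add: aa_add distrib_right sum.distrib)

lemma LL_scale: "LL n (\<lambda>x. c * f x) x = c * LL n f x"
  unfolding LL_def by (simp add: aa_scale sum_distrib_left ac_simps)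

lemma Kinf_add: "f \<in> L2 p \<Longrightarrow> g \<in> L2 p \<Longrightarrow> Kinf p (\<lambda>x. f x + g x) x = Kinf p f x + Kinf p g x"
proof -
  assume f: "f \<in> L2 p" and g: "g \<in> L2 p"
  have "Kinf p (\<lambda>x. f x + g x) x = (\<Sum>n. LL n f x + LL n g x)"
    by (simp add: Kinf_eq L2_add[OF f g] LL_add[OF f g])
  also have "\<dots> = (\<Sum>n. LL n f x) + (\<Sum>n. LL n g x)"
    by (rule suminf_add[symmetric]) (intro summable_norm_cancel[OF LL_summable] f g)+
  finally show ?thesis by (simp add: Kinf_eq f g)
qed

lemma Kinf_scale: "f \<in> L2 p \<Longrightarrow> Kinf p (\<lambda>x. c * f x) x = c * Kinf p f x"
proof -
  assume f: "f \<in> L2 p"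
  have "Kinf p (\<lambda>x. c * f x) x = (\<Sum>n. c * LL n f x)" by (simp add: Kinf_eq L2_scale[OF f] LL_scale)
  also have "\<dots> = c * (\<Sum>n. LL n f x)" by (rule suminf_mult[OF summable_norm_cancel[OF LL_summable[OF f]]])
  finally show ?thesis by (simp add: Kinf_eq[OF f])
qed

lemma Kinf_zero: "Kinf p (\<lambda>x. 0) x = 0"
  using Kinf_scale[OF L2_zero, of 0 x] by simp

lemma Kinf_sum: "finite I \<Longrightarrow> (\<And>i. i \<in> I \<Longrightarrow> f i \<in> L2 p) \<Longrightarrow> Kinf p (\<lambda>x. \<Sum>i\<in>I. f i x) x = (\<Sum>i\<in>I. Kinf p (f i) x)"
proof (induction I rule: finite_induct)
  case empty then show ?case by (simp add: Kinf_zero)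
next
  case (insert a I)
  have "Kinf p (\<lambda>x. \<Sum>i\<in>insert a I. f i x) x = Kinf p (\<lambda>x. f a x + (\<Sum>i\<in>I. f i x)) x"
    using insert by simp
  also have "\<dots> = Kinf p (f a) x + Kinf p (\<lambda>x. \<Sum>i\<in>I. f i x) x"
    using insert by (intro Kinf_add L2_sum) auto
  finally show ?case using insert by simp
qed

lemma Kinf_diff: "f \<in> L2 p \<Longrightarrow> g \<in> L2 p \<Longrightarrow> Kinf p (\<lambda>x. f x - g x) x = Kinf p f x - Kinf p g x"
  using Kinf_add[of f "\<lambda>x. (-1) * g x" x] Kinf_scale[of g "-1" x] L2_scale[of g "-1"] by simp

lemma Kinf_AE:
  assumes [measurable]: "f \<in> borel_measurable M" "g \<in> borel_measurable M" and ae: "AE x in M. f x = g x"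
  shows "Kinf p f = Kinf p g"
proof -
  have "inner_mu p (indicator (Cw u)) f = inner_mu p (indicator (Cw u)) g" if u: "set u \<subseteq> {0,2}" for u
  proof -
    have [measurable]: "Cw u \<in> sets M" using Cw_sets[OF u] sets_M by simp
    show ?thesis unfolding inner_mu_def using ae by (intro integral_cong_AE) auto
  qed
  then have "Km p m f x = Km p m g x" for m x by (auto simp: Km_def words_upto_def intro!: sum.cong)
  then show ?thesis by (intro ext) (simp add: Kinf_def)
qed

lemma L2norm_scale: "f \<in> L2 p \<Longrightarrow> L2norm p (\<lambda>x. c * f x) = cmod c * L2norm p f"
proof -
  have "(\<integral>x. (cmod (c * f x))\<^sup>2 \<partial>M) = (cmod c)\<^sup>2 * (\<integral>x. (cmod (f x))\<^sup>2 \<partial>M)"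
    by (simp add: norm_mult power_mult_distrib)
  then show ?thesis by (simp add: L2norm_def real_sqrt_mult)
qed

lemma L2norm_AE: "f \<in> borel_measurable M \<Longrightarrow> g \<in> borel_measurable M \<Longrightarrow> AE x in M. f x = g x \<Longrightarrow> L2norm p f = L2norm p g"
  unfolding L2norm_def by (subst integral_cong_AE[where g="\<lambda>x. (cmod (g x))\<^sup>2"]) auto

lemma L2norm_zero_AE: "f \<in> L2 p \<Longrightarrow> L2norm p f = 0 \<Longrightarrow> AE x in M. f x = 0"
proof -
  assume f: "f \<in> L2 p" and z: "L2norm p f = 0"
  then have "(\<integral>x. (cmod (f x))\<^sup>2 \<partial>M) = 0" by (simp add: L2norm_def)
  then have "AE x in M. (cmod (f x))\<^sup>2 = 0"
    using f by (subst (asm) integral_nonneg_eq_0_iff_AE) (auto simp: L2_iff)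
  then show ?thesis by simp
qed

definition "KS = {L2norm p (Kinf p f) | f. f \<in> L2 p \<and> L2norm p f \<le> 1}"

lemma KS_bdd: "bdd_above KS"
proof (rule bdd_aboveI)
  fix y assume "y \<in> KS"
  then obtain f where "y = L2norm p (Kinf p f)" "f \<in> L2 p" "L2norm p f \<le> 1" by (auto simp: KS_def)
  moreover have "CK * L2norm p f \<le> CK" using \<open>L2norm p f \<le> 1\<close> CK by (intro mult_left_le) auto
  ultimately show "y \<le> CK" using Kinf_L2norm[of f] by linarith
qed

lemma Kinf_norm_KS: "Kinf_norm p = Sup KS" by (simp add: Kinf_norm_def KS_def)

lemma KS_upper: "f \<in> L2 p \<Longrightarrow> L2norm p f \<le> 1 \<Longrightarrow> L2norm p (Kinf p f) \<le> Kinf_norm p"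
  unfolding Kinf_norm_KS by (rule cSup_upper[OF _ KS_bdd]) (auto simp: KS_def)

lemma Kinf_zero_fun: "Kinf p (\<lambda>x. 0) = (\<lambda>x. 0)" using Kinf_zero by auto

lemma Kinf_norm_nonneg: "0 \<le> Kinf_norm p"
  using KS_upper[OF L2_zero] by (simp add: Kinf_zero_fun L2norm_def)

lemma K_norm_le:
  assumes f: "f \<in> L2 p" shows "L2norm p (Kinf p f) \<le> Kinf_norm p * L2norm p f"
proof (cases "L2norm p f = 0")
  case True
  have "AE x in M. f x = 0" by (rule L2norm_zero_AE[OF f True])
  then have "Kinf p f = Kinf p (\<lambda>x. 0)" using f by (intro Kinf_AE) (auto simp: L2_iff)
  then show ?thesis using True by (simp add: Kinf_zero_fun L2norm_def)
next
  case False
  then have pos: "0 < L2norm p f" using L2norm_nonneg[of f] by simp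
  define c where "c = complex_of_real (1 / L2norm p f)"
  have g: "(\<lambda>x. c * f x) \<in> L2 p" by (rule L2_scale[OF f])
  have "cmod c = 1 / L2norm p f" unfolding c_def norm_of_real using pos by simp
  then have "cmod c * L2norm p f = 1" using pos by simp
  then have "L2norm p (\<lambda>x. c * f x) = 1" by (simp only: L2norm_scale[OF f])
  then have "L2norm p (Kinf p (\<lambda>x. c * f x)) \<le> Kinf_norm p" using KS_upper[OF g] by simp
  moreover have "Kinf p (\<lambda>x. c * f x) = (\<lambda>x. c * Kinf p f x)" using Kinf_scale[OF f] by auto
  ultimately have "cmod c * L2norm p (Kinf p f) \<le> Kinf_norm p" by (simp add: L2norm_scale[OF Kinf_L2[OF f]])
  then have "L2norm p (Kinf p f) / L2norm p f \<le> Kinf_norm p" using \<open>cmod c = 1 / L2norm p f\<close> by simp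
  then show ?thesis using pos by (simp add: divide_le_eq)
qed

end

context cp begin

definition "Fk n = (Kinf p ^^ n) phi"

lemma Fk_0: "Fk 0 = phi" by (simp add: Fk_def)
lemma Fk_Suc: "Fk (Suc n) = Kinf p (Fk n)" by (simp add: Fk_def)

lemma Cantor_sets_M: "Cantor \<in> sets M" using Cantor_sets sets_M by simp

lemma phi_meas: "phi \<in> borel_measurable M"
  unfolding phi_def using Cantor_sets_M by (rule borel_measurable_indicator)

lemma phi_bound: "cmod (phi x) \<le> 1" by (simp add: phi_def split: split_indicator)

lemma phi_L2: "phi \<in> L2 p" using bounded_L2(1)[OF phi_meas phi_bound] .

lemma phi_norm: "L2norm p phi = 1"
proof -
  have "(\<lambda>x. (cmod (phi x))\<^sup>2) = (indicator Cantor :: real \<Rightarrow> real)"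
    by (auto simp: phi_def split: split_indicator)
  then have "(\<integral>x. (cmod (phi x))\<^sup>2 \<partial>M) = measure M Cantor" using Cantor_sets_M by simp
  then show ?thesis by (simp add: L2norm_def measure_Cantor)
qed

lemma Fk_L2: "Fk n \<in> L2 p"
  by (induction n) (auto simp: Fk_0 Fk_Suc phi_L2 Kinf_L2)

lemma Fk_meas: "Fk n \<in> borel_measurable M" using Fk_L2 by (simp add: L2_iff)

lemma Fk_norm: "L2norm p (Fk n) \<le> Kinf_norm p ^ n"
proof (induction n)
  case 0 then show ?case by (simp add: Fk_0 phi_norm)
next
  case (Suc n)
  have "L2norm p (Fk (Suc n)) \<le> Kinf_norm p * L2norm p (Fk n)" unfolding Fk_Suc by (rule K_norm_le[OF Fk_L2])
  also have "\<dots> \<le> Kinf_norm p * Kinf_norm p ^ n" using Suc Kinf_norm_nonneg by (intro mult_left_mono) auto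
  finally show ?case by simp
qed

lemma Fk_bound_Suc: "cmod (Fk (Suc n) x) \<le> CK * Kinf_norm p ^ n"
proof -
  have "cmod (Fk (Suc n) x) \<le> CK * L2norm p (Fk n)" unfolding Fk_Suc by (rule Kinf_bound[OF Fk_L2])
  also have "\<dots> \<le> CK * Kinf_norm p ^ n" using Fk_norm CK by (intro mult_left_mono) auto
  finally show ?thesis .
qed

lemma Fk_bound:
  assumes R: "Kinf_norm p \<le> R" "0 < R"
  shows "cmod (Fk n x) \<le> max 1 (CK / R) * R ^ n"
proof (cases n)
  case 0 then show ?thesis using phi_bound[of x] by (simp add: Fk_0)
next
  case (Suc m)
  have "cmod (Fk n x) \<le> CK * Kinf_norm p ^ m" using Fk_bound_Suc Suc by simp
  also have "\<dots> \<le> CK * R ^ m" using R Kinf_norm_nonneg CK by (intro mult_left_mono power_mono) auto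
  also have "\<dots> = (CK / R) * R ^ n" using Suc R by simp
  also have "\<dots> \<le> max 1 (CK / R) * R ^ n" using R by (intro mult_right_mono) auto
  finally show ?thesis .
qed

lemma moment_Fk: "moment p n = inner_mu p phi (Fk n)" by (simp add: moment_def Fk_def)

lemma inner_phi: "inner_mu p phi f = (\<integral>x. indicator Cantor x * f x \<partial>M)"
  by (simp add: inner_mu_def phi_def)

lemma inner_phi_integrable: "f \<in> L2 p \<Longrightarrow> integrable M (\<lambda>x. indicator Cantor x * f x)"
  using CS_ind(1)[OF _ Cantor_sets_M] .

lemma inner_phi_bound: "f \<in> L2 p \<Longrightarrow> cmod (inner_mu p phi f) \<le> L2norm p f"
  using CS_ind(2)[OF _ Cantor_sets_M, of f] by (simp add: inner_phi measure_Cantor)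

end

context cp begin

lemma resolvent:
  assumes z: "Kinf_norm p < cmod z"
  shows "(\<lambda>n. moment p n * inverse z ^ Suc n) sums mfun p z"
proof -
  define N where "N = Kinf_norm p"
  have N0: "0 \<le> N" using Kinf_norm_nonneg by (simp add: N_def)
  define R where "R = (N + cmod z) / 2"
  have R: "N \<le> R" "0 < R" "R < cmod z" using z N0 by (auto simp: R_def N_def)
  have z0: "z \<noteq> 0" and zpos: "0 < cmod z" using R by auto
  define Dc where "Dc = max 1 (CK / R)"
  have Dc: "0 < Dc" by (simp add: Dc_def)
  define r where "r = R / cmod z"
  have r: "0 < r" "r < 1" using R zpos by (auto simp: r_def)
  define tm where "tm n x = inverse z ^ Suc n * Fk n x" for n x
  define bd where "bd n = Dc / cmod z * r ^ n" for n
  have tm_bd: "cmod (tm n x) \<le> bd n" for n x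
  proof -
    have "cmod (tm n x) = cmod (Fk n x) / cmod z ^ Suc n"
      by (simp add: tm_def norm_mult norm_power norm_inverse divide_inverse mult.commute power_inverse)
    also have "\<dots> \<le> Dc * R ^ n / cmod z ^ Suc n"
      using Fk_bound[of R n x] R by (intro divide_right_mono) (auto simp: Dc_def N_def)
    also have "\<dots> = bd n" using zpos by (simp add: bd_def r_def power_divide)
    finally show ?thesis .
  qed
  have bd_sums: "bd sums (Dc / cmod z * (1 / (1 - r)))"
    unfolding bd_def by (intro sums_mult geometric_sums) (use r in auto)
  have tm_sum: "summable (\<lambda>n. norm (tm n x))" for x
    by (rule summable_comparison_test'[OF sums_summable[OF bd_sums], of 0]) (auto intro: tm_bd)
  define g where "g x = (\<Sum>n. tm n x)" for x
  define G where "G k x = (\<Sum>n<k. tm n x)" for k x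
  define T where "T k = bd k / (1 - r)" for k
  have T_lim: "T \<longlonglongrightarrow> 0"
  proof -
    have "(\<lambda>k. Dc / cmod z * r ^ k / (1 - r)) \<longlonglongrightarrow> Dc / cmod z * 0 / (1 - r)"
      using r by (intro tendsto_intros) auto
    then show ?thesis unfolding T_def[abs_def] bd_def by simp
  qed
  have tail: "cmod (g x - G k x) \<le> T k" for x k
  proof -
    have s: "summable (\<lambda>n. tm n x)" by (rule summable_norm_cancel[OF tm_sum])
    have "g x - G k x = (\<Sum>n. tm (n + k) x)"
      using suminf_split_initial_segment[OF s, of k] by (simp add: g_def G_def)
    also have "norm \<dots> \<le> (\<Sum>n. norm (tm (n + k) x))"
      by (rule summable_norm) (rule summable_ignore_initial_segment[OF tm_sum])
    also have "\<dots> \<le> (\<Sum>n. r ^ k * bd n)"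
      by (intro suminf_le summable_ignore_initial_segment[OF tm_sum] summable_mult sums_summable[OF bd_sums])
         (use tm_bd[of "_ + k"] in \<open>simp add: bd_def power_add mult_ac\<close>)
    also have "\<dots> = r ^ k * (Dc / cmod z * (1 / (1 - r)))" using bd_sums by (simp add: sums_iff suminf_mult)
    also have "\<dots> = T k" by (simp add: T_def bd_def)
    finally show ?thesis .
  qed
  have T0: "0 \<le> T k" for k using tail[of 0 k] by (meson norm_ge_zero order_trans)
  have tm_meas: "tm n \<in> borel_measurable M" for n
    unfolding tm_def[abs_def] using Fk_meas by measurable
  have tm_L2: "tm n \<in> L2 p" for n unfolding tm_def[abs_def] by (rule L2_scale[OF Fk_L2])
  have g_meas: "g \<in> borel_measurable M" unfolding g_def[abs_def] using tm_meas by measurable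
  have G_L2: "G k \<in> L2 p" for k unfolding G_def[abs_def] by (rule L2_sum) (auto intro: tm_L2)
  have G_meas: "G k \<in> borel_measurable M" for k using G_L2 by (simp add: L2_iff)
  have G0: "G 0 = (\<lambda>x. 0)" by (simp add: G_def[abs_def])
  have g_L2: "g \<in> L2 p" using bounded_L2(1)[OF g_meas, of "T 0"] tail[of _ 0] by (simp add: G0)
  have dmeas: "(\<lambda>x. g x - G k x) \<in> borel_measurable M" for k using g_meas G_meas by measurable
  have d_L2: "(\<lambda>x. g x - G k x) \<in> L2 p" for k using L2_diff[OF g_L2 G_L2] .
  have d_norm: "L2norm p (\<lambda>x. g x - G k x) \<le> T k" for k using bounded_L2(2)[OF dmeas tail] .
  have KG: "Kinf p (G k) x = (\<Sum>n<k. inverse z ^ Suc n * Fk (Suc n) x)" for k x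
    unfolding G_def[abs_def] tm_def
    by (simp add: Kinf_sum Kinf_scale Fk_L2 L2_scale Fk_Suc)
  have eq_k: "z * G k x - Kinf p (G k) x = phi x - inverse z ^ k * Fk k x" for k x
  proof -
    have "z * G k x = (\<Sum>n<k. inverse z ^ n * Fk n x)"
      unfolding G_def tm_def sum_distrib_left using z0 by (intro sum.cong) (auto simp: field_simps)
    then have "z * G k x - Kinf p (G k) x = (\<Sum>n<k. inverse z ^ n * Fk n x - inverse z ^ Suc n * Fk (Suc n) x)"
      by (simp add: KG sum_subtractf)
    also have "\<dots> = inverse z ^ 0 * Fk 0 x - inverse z ^ k * Fk k x"
      by (rule sum_lessThan_telescope')
    finally show ?thesis by (simp add: Fk_0)
  qed
  have lim1: "(\<lambda>k. G k x) \<longlonglongrightarrow> g x" for x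
    unfolding G_def g_def by (rule summable_LIMSEQ[OF summable_norm_cancel[OF tm_sum]])
  have lim2: "(\<lambda>k. Kinf p (G k) x) \<longlonglongrightarrow> Kinf p g x" for x
  proof -
    have "(\<lambda>k. Kinf p g x - Kinf p (G k) x) \<longlonglongrightarrow> 0"
    proof (rule Lim_null_comparison)
      show "\<forall>\<^sub>F k in sequentially. norm (Kinf p g x - Kinf p (G k) x) \<le> CK * T k"
      proof (intro always_eventually allI)
        fix k
        have "norm (Kinf p g x - Kinf p (G k) x) = cmod (Kinf p (\<lambda>y. g y - G k y) x)"
          by (simp add: Kinf_diff[OF g_L2 G_L2])
        also have "\<dots> \<le> CK * L2norm p (\<lambda>y. g y - G k y)" by (rule Kinf_bound[OF d_L2])
        also have "\<dots> \<le> CK * T k" using CK d_norm by (intro mult_left_mono) auto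
        finally show "norm (Kinf p g x - Kinf p (G k) x) \<le> CK * T k" .
      qed
      show "(\<lambda>k. CK * T k) \<longlonglongrightarrow> 0" using tendsto_mult_right_zero[OF T_lim] by simp
    qed
    note tendsto_minus[OF this]
    then have "(\<lambda>k. Kinf p (G k) x - Kinf p g x) \<longlonglongrightarrow> 0"
      by simp
    then show ?thesis by (simp add: LIM_zero_iff)
  qed
  have lim3: "(\<lambda>k. inverse z ^ k * Fk k x) \<longlonglongrightarrow> 0" for x
  proof (rule Lim_null_comparison)
    show "\<forall>\<^sub>F k in sequentially. norm (inverse z ^ k * Fk k x) \<le> Dc * r ^ k"
    proof (intro always_eventually allI)
      fix k
      have "norm (inverse z ^ k * Fk k x) = cmod (Fk k x) / cmod z ^ k"
        by (simp add: norm_mult norm_power norm_inverse divide_inverse mult.commute power_inverse)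
      also have "\<dots> \<le> Dc * R ^ k / cmod z ^ k"
        using Fk_bound[of R k x] R by (intro divide_right_mono) (auto simp: Dc_def N_def)
      also have "\<dots> = Dc * r ^ k" by (simp add: r_def power_divide)
      finally show "norm (inverse z ^ k * Fk k x) \<le> Dc * r ^ k" .
    qed
    show "(\<lambda>k. Dc * r ^ k) \<longlonglongrightarrow> 0" using r by (intro tendsto_mult_right_zero LIMSEQ_power_zero) auto
  qed
  have solves: "z * g x - Kinf p g x = phi x" for x
  proof -
    have a: "(\<lambda>k. z * G k x - Kinf p (G k) x) \<longlonglongrightarrow> z * g x - Kinf p g x"
      by (intro tendsto_intros lim1 lim2)
    have b: "(\<lambda>k. z * G k x - Kinf p (G k) x) \<longlonglongrightarrow> phi x - 0"
      unfolding eq_k by (intro tendsto_intros lim3)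
    show ?thesis using LIMSEQ_unique[OF a b] by simp
  qed
  have innerG: "inner_mu p phi (G k) = (\<Sum>n<k. moment p n * inverse z ^ Suc n)" for k
  proof -
    have "inner_mu p phi (G k) = (\<integral>x. (\<Sum>n<k. inverse z ^ Suc n * (indicator Cantor x * Fk n x)) \<partial>M)"
      unfolding inner_phi G_def tm_def by (simp add: sum_distrib_left mult_ac)
    also have "\<dots> = (\<Sum>n<k. (\<integral>x. inverse z ^ Suc n * (indicator Cantor x * Fk n x) \<partial>M))"
      by (rule Bochner_Integration.integral_sum) (intro integrable_mult_right inner_phi_integrable Fk_L2)
    also have "\<dots> = (\<Sum>n<k. moment p n * inverse z ^ Suc n)"
      by (simp add: moment_Fk inner_phi mult.commute)
    finally show ?thesis .
  qed
  have inner_lim: "(\<lambda>k. \<Sum>n<k. moment p n * inverse z ^ Suc n) \<longlonglongrightarrow> inner_mu p phi g"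
  proof -
    have "(\<lambda>k. inner_mu p phi g - inner_mu p phi (G k)) \<longlonglongrightarrow> 0"
    proof (rule Lim_null_comparison)
      show "\<forall>\<^sub>F k in sequentially. norm (inner_mu p phi g - inner_mu p phi (G k)) \<le> T k"
      proof (intro always_eventually allI)
        fix k
        have "inner_mu p phi g - inner_mu p phi (G k) = inner_mu p phi (\<lambda>x. g x - G k x)"
          unfolding inner_phi
          by (subst Bochner_Integration.integral_diff[symmetric])
             (auto intro: inner_phi_integrable g_L2 G_L2 simp: right_diff_distrib)
        then have "norm (inner_mu p phi g - inner_mu p phi (G k)) \<le> L2norm p (\<lambda>x. g x - G k x)"
          using inner_phi_bound[OF d_L2] by simp
        then show "norm (inner_mu p phi g - inner_mu p phi (G k)) \<le> T k" using d_norm by (meson order_trans)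
      qed
    qed (rule T_lim)
    note tendsto_minus[OF this]
    then have "(\<lambda>k. inner_mu p phi (G k) - inner_mu p phi g) \<longlonglongrightarrow> 0"
      by simp
    then show ?thesis by (simp add: LIM_zero_iff innerG)
  qed
  have uniq: "inner_mu p phi g' = inner_mu p phi g"
    if g': "g' \<in> L2 p" and ae: "AE x in M. z * g' x - Kinf p g' x = phi x" for g'
  proof -
    define h where "h x = g' x - g x" for x
    have h: "h \<in> L2 p" unfolding h_def[abs_def] by (rule L2_diff[OF g' g_L2])
    have hm: "h \<in> borel_measurable M" using h by (simp add: L2_iff)
    have Kh: "Kinf p h x = Kinf p g' x - Kinf p g x" for x unfolding h_def[abs_def] by (rule Kinf_diff[OF g' g_L2])
    have "AE x in M. Kinf p h x = z * h x"
      using ae by eventually_elim (use solves in \<open>auto simp: Kh h_def algebra_simps\<close>)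
    then have "L2norm p (Kinf p h) = L2norm p (\<lambda>x. z * h x)"
      by (intro L2norm_AE Kinf_meas h) (use hm in auto)
    also have "\<dots> = cmod z * L2norm p h" by (rule L2norm_scale[OF h])
    finally have "cmod z * L2norm p h \<le> Kinf_norm p * L2norm p h" using K_norm_le[OF h] by simp
    then have "(cmod z - Kinf_norm p) * L2norm p h \<le> 0" by (simp add: algebra_simps)
    then have "L2norm p h \<le> 0" using z by (simp add: mult_le_0_iff)
    then have "L2norm p h = 0" using L2norm_nonneg[of h] by linarith
    then have "AE x in M. h x = 0" by (rule L2norm_zero_AE[OF h])
    then have "AE x in M. indicator Cantor x * g' x = indicator Cantor x * g x"
      by eventually_elim (simp add: h_def)
    then show ?thesis unfolding inner_phi
      using g' g_L2 by (intro integral_cong_AE) (auto simp: L2_iff intro!: borel_measurable_times borel_measurable_indicator Cantor_sets_M)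
  qed
  have "mfun p z = inner_mu p phi g"
    unfolding mfun_def
  proof (rule the_equality)
    show "\<exists>g'\<in>L2 p. (AE x in M. z * g' x - Kinf p g' x = phi x) \<and> inner_mu p phi g = inner_mu p phi g'"
      using g_L2 solves by auto
    fix c assume "\<exists>g'\<in>L2 p. (AE x in M. z * g' x - Kinf p g' x = phi x) \<and> c = inner_mu p phi g'"
    then show "c = inner_mu p phi g" using uniq by auto
  qed
  then show ?thesis using inner_lim by (simp add: sums_def)
qed

end

context cp begin

lemma inj_Sd: "inj (Sd d)" by (rule injI) (simp add: Sd_inj)

lemma ind_Cw_Cons_same: "indicator (Cw (d # v)) (Sd d x) = (indicator (Cw v) x :: complex)"
  by (simp add: Cw_Cons inj_image_mem_iff[OF inj_Sd] split: split_indicator)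

lemma aa_Cons:
  assumes f: "f \<in> L2 p" and d: "d \<in> {0,2}" and v: "set v \<subseteq> {0,2}"
  shows "aa (d # v) f = complex_of_real (pd p d) * aa v (\<lambda>x. f (Sd d x))"
proof -
  define h where "h x = indicator (Cw (d # v)) x * f x" for x
  have dv: "d # v \<in> words_of_len (Suc (length v))" using d v by (auto simp: words_of_len_def)
  have hi: "integrable M h" unfolding h_def[abs_def] by (rule CS_ind(1)[OF f Cw_sets_M[OF dv]])
  have same: "(\<integral>x. h (Sd d x) \<partial>M) = aa v (\<lambda>x. f (Sd d x))"
    unfolding h_def aa_int by (simp add: ind_Cw_Cons_same)
  have other: "(\<integral>x. h (Sd e x) \<partial>M) = 0" if e: "e \<in> {0,2}" "e \<noteq> d" for e
  proof -
    have "(\<integral>x. h (Sd e x) \<partial>M) = (\<integral>x. 0 \<partial>M)"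
      by (rule Bochner_Integration.integral_cong[OF refl])
         (use Cw_Cons_sep[OF d e(1) _ v] e(2) in \<open>auto simp: h_def space_M split: split_indicator\<close>)
    then show ?thesis by simp
  qed
  have "aa (d # v) f = (\<integral>x. h x \<partial>M)" by (simp add: aa_int h_def)
  also have "\<dots> = p *\<^sub>R (\<integral>x. h (Sd 0 x) \<partial>M) + (1 - p) *\<^sub>R (\<integral>x. h (Sd 2 x) \<partial>M)"
    by (rule integral_selfsim(3)[OF hi])
  also have "\<dots> = complex_of_real (pd p d) * aa v (\<lambda>x. f (Sd d x))"
    using d same other[of 0] other[of 2] by (auto simp: pd_def scaleR_conv_of_real)
  finally show ?thesis .
qed

lemma L2_comp:
  assumes f: "f \<in> L2 p" and d: "d \<in> {0,2}"
  shows "(\<lambda>x. f (Sd d x)) \<in> L2 p"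
proof -
  have fm: "f \<in> borel_measurable M" using f by (simp add: L2_iff)
  have m: "(\<lambda>x. f (Sd d x)) \<in> borel_measurable M" by (rule measurable_compose[OF Sd_meas[OF d] fm])
  have i: "integrable M (\<lambda>x. (cmod (f x))\<^sup>2)" using f by (simp add: L2_iff)
  have "integrable M (\<lambda>x. (cmod (f (Sd d x)))\<^sup>2)"
    using integral_selfsim(1)[OF i] integral_selfsim(2)[OF i] d by auto
  then show ?thesis using m by (simp add: L2_iff)
qed

lemma LL_Suc_Sd:
  assumes f: "f \<in> L2 p" and d: "d \<in> {0,2}" and x: "x \<in> {0..1}"
  shows "LL (Suc n) f (Sd d x) = complex_of_real (pd p d) * LL n (\<lambda>y. f (Sd d y)) x"
proof (cases "\<exists>v\<in>words_of_len n. x \<in> Cw v")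
  case True
  then obtain v where v: "v \<in> words_of_len n" "x \<in> Cw v" by blast
  have dv: "d # v \<in> words_of_len (Suc n)" using d v by (auto simp: words_of_len_def)
  have "Sd d x \<in> Cw (d # v)" using v by (simp add: Cw_Cons)
  then have "LL (Suc n) f (Sd d x) = aa (d # v) f" by (rule LL_single[OF dv])
  also have "\<dots> = complex_of_real (pd p d) * aa v (\<lambda>y. f (Sd d y))"
    using aa_Cons[OF f d] v by (auto simp: words_of_len_def)
  also have "aa v (\<lambda>y. f (Sd d y)) = LL n (\<lambda>y. f (Sd d y)) x" using LL_single[OF v] by simp
  finally show ?thesis .
next
  case False
  have "\<forall>u\<in>words_of_len (Suc n). Sd d x \<notin> Cw u"
  proof (intro ballI notI)
    fix u assume u: "u \<in> words_of_len (Suc n)" and ux: "Sd d x \<in> Cw u"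
    then obtain e w where ew: "u = e # w" "e \<in> {0,2}" "w \<in> words_of_len n" by (auto simp: words_of_len_Suc)
    show False
    proof (cases "e = d")
      case True
      then have "x \<in> Cw w" using ux ew by (simp add: Cw_Cons inj_image_mem_iff[OF inj_Sd])
      then show False using False ew by blast
    next
      case ne: False
      show False using Cw_Cons_sep[OF ew(2) d ne _ x] ew ux by (auto simp: words_of_len_def)
    qed
  qed
  then show ?thesis using LL_none False by simp
qed

lemma LL_0: "LL 0 f x = inner_mu p phi f * phi x"
proof -
  have "words_of_len 0 = {[]}" by (auto simp: words_of_len_def)
  then show ?thesis by (simp add: LL_def aa_def phi_def)
qed

lemma Kinf_Sd:
  assumes f: "f \<in> L2 p" and d: "d \<in> {0,2}" and x: "x \<in> {0..1}"
  shows "Kinf p f (Sd d x) = inner_mu p phi f * phi (Sd d x) + complex_of_real (pd p d) * Kinf p (\<lambda>y. f (Sd d y)) x"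
proof -
  have f': "(\<lambda>y. f (Sd d y)) \<in> L2 p" by (rule L2_comp[OF f d])
  have s: "summable (\<lambda>n. LL n f (Sd d x))" by (rule summable_norm_cancel[OF LL_summable[OF f]])
  have s': "summable (\<lambda>n. LL n (\<lambda>y. f (Sd d y)) x)" by (rule summable_norm_cancel[OF LL_summable[OF f']])
  have "Kinf p f (Sd d x) = LL 0 f (Sd d x) + (\<Sum>n. LL (Suc n) f (Sd d x))"
    using suminf_split_head[OF s] by (simp add: Kinf_eq[OF f])
  also have "(\<Sum>n. LL (Suc n) f (Sd d x)) = (\<Sum>n. complex_of_real (pd p d) * LL n (\<lambda>y. f (Sd d y)) x)"
    using LL_Suc_Sd[OF f d x] by simp
  also have "\<dots> = complex_of_real (pd p d) * Kinf p (\<lambda>y. f (Sd d y)) x"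
    using suminf_mult[OF s'] by (simp add: Kinf_eq[OF f'])
  finally show ?thesis by (simp add: LL_0)
qed

lemma phi_Sd_AE: "d \<in> {0,2} \<Longrightarrow> AE x in M. phi (Sd d x) = phi x"
  using AE_Cantor by eventually_elim (auto simp: phi_def Sd_Cantor)

end

context cp begin

definition "Rk d n x = (complex_of_real (pd p d)) ^ n * Fk n x +
   (\<Sum>j<n. moment p j * (complex_of_real (pd p d)) ^ (n - 1 - j) * Fk (n - 1 - j) x)"

lemma Rk_L2: "Rk d n \<in> L2 p"
proof -
  have "(\<lambda>x. (complex_of_real (pd p d)) ^ n * Fk n x +
     (\<Sum>j<n. moment p j * (complex_of_real (pd p d)) ^ (n - 1 - j) * Fk (n - 1 - j) x)) \<in> L2 p"
    by (intro L2_add L2_scale L2_sum Fk_L2) auto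
  then show ?thesis by (simp add: Rk_def[abs_def])
qed

lemma Kinf_Rk: "Kinf p (Rk d n) x = (complex_of_real (pd p d)) ^ n * Fk (Suc n) x +
   (\<Sum>j<n. moment p j * (complex_of_real (pd p d)) ^ (n - 1 - j) * Fk (Suc (n - 1 - j)) x)"
proof -
  have "Kinf p (Rk d n) x = Kinf p (\<lambda>x. (complex_of_real (pd p d)) ^ n * Fk n x) x +
     Kinf p (\<lambda>x. \<Sum>j<n. moment p j * (complex_of_real (pd p d)) ^ (n - 1 - j) * Fk (n - 1 - j) x) x"
    unfolding Rk_def[abs_def] by (rule Kinf_add) (intro L2_scale L2_sum Fk_L2; simp)+
  also have "\<dots> = (complex_of_real (pd p d)) ^ n * Fk (Suc n) x +
     (\<Sum>j<n. moment p j * (complex_of_real (pd p d)) ^ (n - 1 - j) * Fk (Suc (n - 1 - j)) x)"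
    by (simp add: Kinf_scale Kinf_sum Fk_L2 L2_scale Fk_Suc)
  finally show ?thesis .
qed

lemma Fk_Sd_AE:
  assumes d: "d \<in> {0,2}"
  shows "AE x in M. Fk n (Sd d x) = Rk d n x"
proof (induction n)
  case 0
  show ?case using phi_Sd_AE[OF d] by eventually_elim (simp add: Fk_0 Rk_def)
next
  case (Suc n)
  let ?q = "complex_of_real (pd p d)"
  have m1: "(\<lambda>x. Fk n (Sd d x)) \<in> borel_measurable M"
    by (rule measurable_compose[OF Sd_meas[OF d] Fk_meas])
  have m2: "Rk d n \<in> borel_measurable M" using Rk_L2 by (simp add: L2_iff)
  have KK: "Kinf p (\<lambda>x. Fk n (Sd d x)) = Kinf p (Rk d n)" by (rule Kinf_AE[OF m1 m2 Suc])
  have "AE x in M. x \<in> {0..1}" by (rule AE_I2) (simp add: space_M)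
  with phi_Sd_AE[OF d] show ?case
  proof eventually_elim
    case (elim x)
    have "Fk (Suc n) (Sd d x) = moment p n * phi (Sd d x) + ?q * Kinf p (\<lambda>y. Fk n (Sd d y)) x"
      unfolding Fk_Suc by (subst Kinf_Sd[OF Fk_L2 d elim(2)]) (simp add: moment_Fk)
    also have "\<dots> = moment p n * Fk 0 x + ?q * Kinf p (Rk d n) x" using elim by (simp add: KK Fk_0)
    also have "\<dots> = ?q ^ Suc n * Fk (Suc n) x +
       ((\<Sum>j<n. moment p j * ?q ^ (Suc n - 1 - j) * Fk (Suc n - 1 - j) x) + moment p n * ?q ^ (Suc n - 1 - n) * Fk (Suc n - 1 - n) x)"
    proof -
      have "?q * (\<Sum>j<n. moment p j * ?q ^ (n - 1 - j) * Fk (Suc (n - 1 - j)) x) =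
          (\<Sum>j<n. moment p j * ?q ^ (Suc n - 1 - j) * Fk (Suc n - 1 - j) x)"
        unfolding sum_distrib_left
      proof (intro sum.cong refl)
        fix j assume "j \<in> {..<n}"
        then have j: "Suc n - 1 - j = Suc (n - 1 - j)" by auto
        show "?q * (moment p j * ?q ^ (n - 1 - j) * Fk (Suc (n - 1 - j)) x) =
          moment p j * ?q ^ (Suc n - 1 - j) * Fk (Suc n - 1 - j) x"
          unfolding j by (simp add: mult_ac)
      qed
      then show ?thesis by (simp add: Kinf_Rk distrib_left mult_ac)
    qed
    also have "\<dots> = Rk d (Suc n) x" by (simp add: Rk_def)
    finally show ?case .
  qed
qed

lemma inner_phi_add: "f \<in> L2 p \<Longrightarrow> g \<in> L2 p \<Longrightarrow> inner_mu p phi (\<lambda>x. f x + g x) = inner_mu p phi f + inner_mu p phi g"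
  unfolding inner_phi by (simp add: distrib_left Bochner_Integration.integral_add inner_phi_integrable)

lemma inner_phi_scale: "inner_mu p phi (\<lambda>x. c * f x) = c * inner_mu p phi f"
  unfolding inner_phi by (simp add: mult.left_commute)

lemma inner_phi_sum: "finite I \<Longrightarrow> (\<And>i. i \<in> I \<Longrightarrow> f i \<in> L2 p) \<Longrightarrow>
   inner_mu p phi (\<lambda>x. \<Sum>i\<in>I. f i x) = (\<Sum>i\<in>I. inner_mu p phi (f i))"
proof (induction I rule: finite_induct)
  case empty then show ?case by (simp add: inner_phi)
next
  case (insert a I)
  then show ?case by (simp add: inner_phi_add L2_sum)
qed

lemma inner_Rk: "inner_mu p phi (Rk d n) = (complex_of_real (pd p d)) ^ n * moment p n +
   (\<Sum>j<n. moment p j * (complex_of_real (pd p d)) ^ (n - 1 - j) * moment p (n - 1 - j))"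
proof -
  let ?q = "complex_of_real (pd p d)"
  have s: "inner_mu p phi (\<lambda>x. \<Sum>j<n. moment p j * ?q ^ (n - 1 - j) * Fk (n - 1 - j) x) =
     (\<Sum>j<n. inner_mu p phi (\<lambda>x. moment p j * ?q ^ (n - 1 - j) * Fk (n - 1 - j) x))"
    by (rule inner_phi_sum) (auto intro: L2_scale Fk_L2)
  have "inner_mu p phi (Rk d n) = inner_mu p phi (\<lambda>x. ?q ^ n * Fk n x) +
      inner_mu p phi (\<lambda>x. \<Sum>j<n. moment p j * ?q ^ (n - 1 - j) * Fk (n - 1 - j) x)"
    unfolding Rk_def[abs_def] by (rule inner_phi_add) (auto intro!: L2_scale L2_sum Fk_L2)
  also note s
  also have "(\<Sum>j<n. inner_mu p phi (\<lambda>x. moment p j * ?q ^ (n - 1 - j) * Fk (n - 1 - j) x)) =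
      (\<Sum>j<n. moment p j * ?q ^ (n - 1 - j) * moment p (n - 1 - j))"
    by (intro sum.cong refl) (simp only: inner_phi_scale moment_Fk)
  finally show ?thesis by (simp only: inner_phi_scale moment_Fk)
qed

lemma moment_split:
  "moment p n = p *\<^sub>R inner_mu p phi (Rk 0 n) + (1 - p) *\<^sub>R inner_mu p phi (Rk 2 n)"
proof -
  define h where "h x = indicator Cantor x * Fk n x" for x
  have hi: "integrable M h" unfolding h_def[abs_def] by (rule inner_phi_integrable[OF Fk_L2])
  have comp: "(\<integral>x. h (Sd d x) \<partial>M) = inner_mu p phi (Rk d n)" if d: "d \<in> {0,2}" for d
  proof -
    have "AE x in M. h (Sd d x) = indicator Cantor x * Rk d n x"
      using phi_Sd_AE[OF d] Fk_Sd_AE[OF d, of n] by eventually_elim (simp add: h_def phi_def)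
    then have "(\<integral>x. h (Sd d x) \<partial>M) = (\<integral>x. indicator Cantor x * Rk d n x \<partial>M)"
    proof (intro integral_cong_AE)
      show "(\<lambda>x. h (Sd d x)) \<in> borel_measurable M"
        using integral_selfsim(1,2)[OF hi] d by auto
      show "(\<lambda>x. indicator Cantor x * Rk d n x) \<in> borel_measurable M"
        using inner_phi_integrable[OF Rk_L2] by auto
    qed
    then show ?thesis by (simp add: inner_phi)
  qed
  have "moment p n = (\<integral>x. h x \<partial>M)" by (simp add: moment_Fk inner_phi h_def)
  also have "\<dots> = p *\<^sub>R (\<integral>x. h (Sd 0 x) \<partial>M) + (1 - p) *\<^sub>R (\<integral>x. h (Sd 2 x) \<partial>M)"
    by (rule integral_selfsim(3)[OF hi])
  finally show ?thesis using comp[of 0] comp[of 2] by simp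
qed

end

definition sig :: "real \<Rightarrow> nat \<Rightarrow> complex" where
  "sig p n = complex_of_real p ^ Suc n + (1 - complex_of_real p) ^ Suc n"

lemma sig_real: "sig p n = complex_of_real (p ^ Suc n + (1 - p) ^ Suc n)"
  by (simp add: sig_def)

context cp begin

lemma mult_into: "a * (a ^ n * m n + (\<Sum>j<n. m j * a ^ (n - Suc j) * m (n - Suc j))) =
    a ^ Suc n * m n + (\<Sum>j<n. a ^ Suc (n - Suc j) * m j * m (n - Suc j))"
  for a :: complex and m :: "nat \<Rightarrow> complex"
  by (simp add: distrib_left sum_distrib_left mult_ac)

lemma moment_rec:
  "moment p n = sig p n * moment p n + (\<Sum>j<n. sig p (n - 1 - j) * moment p j * moment p (n - 1 - j))"
proof -
  let ?P = "complex_of_real p"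
  have "moment p n = ?P * inner_mu p phi (Rk 0 n) + (1 - ?P) * inner_mu p phi (Rk 2 n)"
    using moment_split[of n] by (simp add: scaleR_conv_of_real)
  also have "\<dots> = (?P ^ Suc n * moment p n + (\<Sum>j<n. ?P ^ Suc (n - 1 - j) * moment p j * moment p (n - 1 - j))) +
      ((1 - ?P) ^ Suc n * moment p n + (\<Sum>j<n. (1 - ?P) ^ Suc (n - 1 - j) * moment p j * moment p (n - 1 - j)))"
    unfolding inner_Rk by (simp add: pd_def mult_into[of ?P] mult_into[of "1 - ?P"] del: power_Suc)
  also have "\<dots> = sig p n * moment p n + (\<Sum>j<n. sig p (n - 1 - j) * moment p j * moment p (n - 1 - j))"
    by (simp add: sig_def distrib_right sum.distrib del: power_Suc)
  finally show ?thesis .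
qed

lemma moment_0: "moment p 0 = 1"
proof -
  have e: "(\<lambda>x. indicator Cantor x * phi x) = (indicator Cantor :: real \<Rightarrow> complex)"
    by (auto simp: phi_def split: split_indicator)
  have "moment p 0 = (\<integral>x. indicator Cantor x \<partial>M)" by (simp add: moment_Fk Fk_0 inner_phi e)
  also have "(indicator Cantor :: real \<Rightarrow> complex) = (\<lambda>x. complex_of_real (indicator Cantor x))"
    by (auto split: split_indicator)
  also have "(\<integral>x. complex_of_real (indicator Cantor x) \<partial>M) = complex_of_real (\<integral>x. indicator Cantor x \<partial>M)"
    by (rule integral_complex_of_real)
  also have "(\<integral>x. indicator Cantor x \<partial>M) = measure M Cantor"
    using Cantor_sets_M by (simp add: less_top[symmetric])
  finally show ?thesis by (simp add: measure_Cantor)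
qed

end

lemma pos_gap:
  fixes p :: real assumes p: "0 < p" "p < 1" and n: "n \<ge> 1"
  shows "1 - p ^ (n + 1) - (1 - p) ^ (n + 1) > 0"
proof -
  have "p ^ (n + 1) \<le> p ^ 2" using p n by (intro power_decreasing) auto
  moreover have "(1 - p) ^ (n + 1) \<le> (1 - p) ^ 2" using p n by (intro power_decreasing) auto
  moreover have "p ^ 2 + (1 - p) ^ 2 < 1"
  proof -
    have "0 < p * (1 - p)" using p by simp
    then show ?thesis by (simp add: power2_eq_square algebra_simps)
  qed
  ultimately show ?thesis by linarith
qed

lemma fix_uniq: "x = a * x + b \<Longrightarrow> y = a * y + b \<Longrightarrow> a \<noteq> (1::complex) \<Longrightarrow> x = y"
proof -
  assume h: "x = a * x + b" "y = a * y + b" "a \<noteq> 1"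
  have g: "w * (1 - a) = 0" if "a * w = w" for w :: complex
  proof -
    have "w * (1 - a) = w - a * w" by (simp add: algebra_simps)
    also have "\<dots> = 0" using that by simp
    finally show ?thesis .
  qed
  have "x - y = (a * x + b) - (a * y + b)" using arg_cong2[OF h(1) h(2), of "(-)"] .
  also have "\<dots> = a * (x - y)" by (simp add: algebra_simps)
  finally have "(x - y) * (1 - a) = 0" by (intro g) simp
  then show ?thesis using h(3) by simp
qed

context cp begin

definition "m1 = 1 / (2 * p * (1 - p))"
definition "m2 = (p^2 - p + 1) / (3 * p^2 * (1 - p)^2)"
definition "m3 = (12 * p^4 - 24 * p^3 + 38 * p^2 - 26 * p + 11) / (24 * p^3 * (1 - p)^3 * (p^2 - p + 2))"

lemma real1: "m1 = (p^2 + (1-p)^2) * m1 + (p + (1 - p))"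
  using p0 p1 unfolding m1_def by (simp add: field_simps) (simp add: algebra_simps power2_eq_square)

lemma real2: "m2 = (p^3 + (1-p)^3) * m2 + ((p^2 + (1-p)^2) * m1 + (p + (1-p)) * m1)"
  using p0 p1 unfolding m1_def m2_def apply (simp add: field_simps) by algebra

lemma real3: "m3 = (p^4 + (1-p)^4) * m3 + ((p^3 + (1-p)^3) * m2 + (p^2 + (1-p)^2) * m1 * m1 + (p + (1-p)) * m2)"
proof -
  define t where "t = p * (1 - p)"
  have t0: "0 < t" using p0 p1 by (simp add: t_def)
  have "p * (1 - p) \<le> p" using p0 p1 by (intro mult_left_le) auto
  then have t1: "t < 1" using p1 unfolding t_def by linarith
  have e1: "m1 = 1 / (2 * t)" unfolding m1_def t_def by (simp add: mult.assoc)
  have e2: "m2 = (1 - t) / (3 * t^2)" unfolding m2_def t_def by (simp add: power_mult_distrib) (simp add: algebra_simps power2_eq_square)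
  have e3: "m3 = (12 * t^2 - 26 * t + 11) / (24 * t^3 * (2 - t))" unfolding m3_def t_def
  proof -
    have a: "12 * p^4 - 24 * p^3 + 38 * p^2 - 26 * p + 11 = 12 * (p * (1 - p))^2 - 26 * (p * (1 - p)) + 11" by algebra
    have b: "24 * p^3 * (1 - p)^3 * (p^2 - p + 2) = 24 * (p * (1 - p))^3 * (2 - p * (1 - p))" by algebra
    show "(12 * p^4 - 24 * p^3 + 38 * p^2 - 26 * p + 11) / (24 * p^3 * (1 - p)^3 * (p^2 - p + 2)) =
      (12 * (p * (1 - p))^2 - 26 * (p * (1 - p)) + 11) / (24 * (p * (1 - p))^3 * (2 - p * (1 - p)))"
      by (simp only: a b)
  qed
  have s1: "p^2 + (1-p)^2 = 1 - 2 * t" unfolding t_def by algebra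
  have s2: "p^3 + (1-p)^3 = 1 - 3 * t" unfolding t_def by algebra
  have s3: "p^4 + (1-p)^4 = 1 - 4 * t + 2 * t^2" unfolding t_def by algebra
  have s0: "p + (1 - p) = 1" by simp
  have d: "2 - t \<noteq> 0" using t1 by simp
  define X where "X = 2 * t * (2 - t)"
  have A: "1 - 4 * t + 2 * t^2 = 1 - X" unfolding X_def by algebra
  have B: "(12 * t^2 - 26 * t + 11) / (24 * t^3 * (2 - t)) * X = (12 * t^2 - 26 * t + 11) / (12 * t^2)"
    unfolding X_def using t0 d by (simp add: field_simps power2_eq_square power3_eq_cube)
  have C: "(1 - 3 * t) * ((1 - t) / (3 * t^2)) + (1 - 2 * t) * (1 / (2 * t)) * (1 / (2 * t)) + 1 * ((1 - t) / (3 * t^2))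
     = (12 * t^2 - 26 * t + 11) / (12 * t^2)"
    using t0 by (simp add: field_simps power2_eq_square)
  have gen: "a * Y = V \<Longrightarrow> R = V \<Longrightarrow> a = (1 - Y) * a + R" for a Y V R :: real
  proof -
    assume h: "a * Y = V" "R = V"
    have "(1 - Y) * a = a - a * Y" by (simp add: algebra_simps)
    then show ?thesis using h by linarith
  qed
  show ?thesis unfolding e1 e2 e3 s1 s2 s3 s0 A by (rule gen[OF B C])
qed

end

context cp begin

lemma sig_ne1: "n \<ge> 1 \<Longrightarrow> sig p n \<noteq> 1"
proof
  assume n: "n \<ge> 1" and "sig p n = 1"
  then have "p ^ Suc n + (1 - p) ^ Suc n = 1" unfolding sig_real by (metis of_real_eq_1_iff)
  then show False using pos_gap[OF p0 p1 n] by simp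
qed

lemma sig0: "sig p 0 = 1" by (simp add: sig_def)

lemma r1: "moment p 1 = sig p 1 * moment p 1 + sig p 0 * moment p 0 * moment p 0"
  using moment_rec[of 1] by simp

lemma r2: "moment p 2 = sig p 2 * moment p 2 + (sig p 1 * moment p 0 * moment p 1 + sig p 0 * moment p 1 * moment p 0)"
  using moment_rec[of 2] by (simp add: numeral_2_eq_2 lessThan_Suc add.commute)

lemma r3: "moment p 3 = sig p 3 * moment p 3 + (sig p 2 * moment p 0 * moment p 2 + sig p 1 * moment p 1 * moment p 1 + sig p 0 * moment p 2 * moment p 0)"
  using moment_rec[of 3] by (simp add: numeral_3_eq_3 numeral_2_eq_2 lessThan_Suc add_ac)

lemma mom1: "moment p 1 = complex_of_real m1"
proof (rule fix_uniq)
  show "moment p 1 = sig p 1 * moment p 1 + 1" using r1 by (simp add: moment_0 sig0)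
  show "complex_of_real m1 = sig p 1 * complex_of_real m1 + 1"
    using arg_cong[OF real1, of complex_of_real] by (simp add: sig_real power2_eq_square power3_eq_cube power4_eq_xxxx)
  show "sig p 1 \<noteq> 1" by (rule sig_ne1) simp
qed

lemma mom2: "moment p 2 = complex_of_real m2"
proof (rule fix_uniq)
  show "moment p 2 = sig p 2 * moment p 2 + (sig p 1 * complex_of_real m1 + complex_of_real m1)"
    using r2 by (simp add: moment_0 sig0 mom1[unfolded One_nat_def])
  show "complex_of_real m2 = sig p 2 * complex_of_real m2 + (sig p 1 * complex_of_real m1 + complex_of_real m1)"
    using arg_cong[OF real2, of complex_of_real] by (simp add: sig_real power2_eq_square power3_eq_cube power4_eq_xxxx)
  show "sig p 2 \<noteq> 1" by (rule sig_ne1) simp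
qed

lemma mom3: "moment p 3 = complex_of_real m3"
proof (rule fix_uniq)
  show "moment p 3 = sig p 3 * moment p 3 + (sig p 2 * complex_of_real m2 + sig p 1 * complex_of_real m1 * complex_of_real m1 + complex_of_real m2)"
    using r3 by (simp add: moment_0 sig0 mom1[unfolded One_nat_def] mom2)
  show "complex_of_real m3 = sig p 3 * complex_of_real m3 + (sig p 2 * complex_of_real m2 + sig p 1 * complex_of_real m1 * complex_of_real m1 + complex_of_real m2)"
    using arg_cong[OF real3, of complex_of_real] by (simp add: sig_real power2_eq_square power3_eq_cube power4_eq_xxxx)
  show "sig p 3 \<noteq> 1" by (rule sig_ne1) simp
qed

end

definition es_of :: "nat \<Rightarrow> nat \<Rightarrow> nat list" where
  "es_of n j = map (\<lambda>i. (if i = j then 1 else 0) + (if i = n - 1 - j then 1 else 0)) [0..<n]"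

definition mlist :: "nat \<Rightarrow> nat \<Rightarrow> ratpoly" where
  "mlist n j = (1, n - j, es_of n j) #
     map (\<lambda>i. (of_int ((-1) ^ i) * of_nat ((n - j) choose i), i, es_of n j)) [0..<Suc (n - j)]"

definition Pn :: "nat \<Rightarrow> ratpoly" where
  "Pn n = concat (map (mlist n) [0..<n])"

lemma Pn_vars: "ratpoly_vars n (Pn n)"
  by (auto simp: ratpoly_vars_def Pn_def mlist_def es_of_def)

lemma sum_list_map_concat: "sum_list (map f (concat L)) = sum_list (map (\<lambda>l. sum_list (map f l)) L)"
  by (induction L) auto

lemma prod_es:
  fixes X :: "nat \<Rightarrow> 'a::comm_ring_1"
  assumes j: "j < n"
  shows "(\<Prod>i<length (es_of n j). X i ^ (es_of n j ! i)) = X j * X (n - 1 - j)"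
proof -
  have "(\<Prod>i<length (es_of n j). X i ^ (es_of n j ! i)) =
      (\<Prod>i<n. (if i = j then X i else 1) * (if i = n - 1 - j then X i else 1))"
    by (intro prod.cong) (auto simp: es_of_def power_add)
  also have "\<dots> = (\<Prod>i<n. (if i = j then X i else 1)) * (\<Prod>i<n. (if i = n - 1 - j then X i else 1))"
    by (rule prod.distrib)
  also have "\<dots> = X j * X (n - 1 - j)" using j by (simp add: prod.delta')
  finally show ?thesis .
qed

lemma eval_mlist:
  fixes x :: "'a::field_char_0"
  assumes j: "j < n"
  shows "sum_list (map (\<lambda>(c, e, es). of_rat c * x ^ e * (\<Prod>i<length es. X i ^ (es ! i))) (mlist n j))
     = (x ^ (n - j) + (1 - x) ^ (n - j)) * X j * X (n - 1 - j)"
proof -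
  let ?XX = "X j * X (n - 1 - j)"
  have "sum_list (map (\<lambda>(c, e, es). of_rat c * x ^ e * (\<Prod>i<length es. X i ^ (es ! i))) (mlist n j))
     = x ^ (n - j) * ?XX + sum_list (map (\<lambda>i. of_rat (of_int ((-1) ^ i) * of_nat ((n - j) choose i)) * x ^ i * ?XX) [0..<Suc (n - j)])"
    by (simp add: mlist_def prod_es[OF j] o_def)
  also have "sum_list (map (\<lambda>i. of_rat (of_int ((-1) ^ i) * of_nat ((n - j) choose i)) * x ^ i * ?XX) [0..<Suc (n - j)])
     = (\<Sum>i\<le>n - j. of_nat ((n - j) choose i) * (- x) ^ i * 1 ^ (n - j - i)) * ?XX"
  proof -
    have step: "of_rat (of_int ((-1) ^ i) * of_nat ((n - j) choose i)) * x ^ i * ?XX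
       = (of_nat ((n - j) choose i) * (- x) ^ i * 1 ^ (n - j - i)) * ?XX" for i
    proof -
      have c: "(of_rat (of_int ((-1) ^ i) * of_nat ((n - j) choose i)) :: 'a) = (-1) ^ i * of_nat ((n - j) choose i)"
        by (simp add: of_rat_mult of_rat_power)
      have m: "(- x) ^ i = (-1) ^ i * x ^ i" by (rule power_minus)
      show ?thesis unfolding c m power_one mult_1_right by (simp only: mult_ac)
    qed
    show ?thesis
      by (simp only: interv_sum_list_conv_sum_set_nat set_upt atLeast0LessThan lessThan_Suc_atMost step sum_distrib_right)
  qed
  also have "(\<Sum>i\<le>n - j. of_nat ((n - j) choose i) * (- x) ^ i * 1 ^ (n - j - i)) = (- x + 1) ^ (n - j)"
    by (rule binomial_ring[symmetric])
  also have "- x + 1 = 1 - x" by simp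
  finally have "sum_list (map (\<lambda>(c, e, es). of_rat c * x ^ e * (\<Prod>i<length es. X i ^ (es ! i))) (mlist n j))
     = x ^ (n - j) * ?XX + (1 - x) ^ (n - j) * ?XX" .
  then show ?thesis by (simp only: distrib_right mult.assoc)
qed

lemma eval_Pn:
  fixes x :: "'a::field_char_0"
  shows "ratpoly_eval (Pn n) x X = (\<Sum>j<n. (x ^ (n - j) + (1 - x) ^ (n - j)) * X j * X (n - 1 - j))"
proof -
  have "ratpoly_eval (Pn n) x X = sum_list (map (\<lambda>j. sum_list (map (\<lambda>(c, e, es). of_rat c * x ^ e * (\<Prod>i<length es. X i ^ (es ! i))) (mlist n j))) [0..<n])"
    unfolding ratpoly_eval_def Pn_def sum_list_map_concat by (simp add: o_def)
  also have "\<dots> = (\<Sum>j<n. sum_list (map (\<lambda>(c, e, es). of_rat c * x ^ e * (\<Prod>i<length es. X i ^ (es ! i))) (mlist n j)))"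
    by (simp add: interv_sum_list_conv_sum_set_nat atLeast0LessThan)
  also have "\<dots> = (\<Sum>j<n. (x ^ (n - j) + (1 - x) ^ (n - j)) * X j * X (n - 1 - j))"
    by (intro sum.cong refl eval_mlist) auto
  finally show ?thesis .
qed

lemma (in cp) poly_rec:
  "complex_of_real (1 - p ^ (n + 1) - (1 - p) ^ (n + 1)) * moment p n = ratpoly_eval (Pn n) (complex_of_real p) (moment p)"
proof -
  have e: "complex_of_real (1 - p ^ (n + 1) - (1 - p) ^ (n + 1)) = 1 - sig p n" by (simp add: sig_def)
  have "complex_of_real (1 - p ^ (n + 1) - (1 - p) ^ (n + 1)) * moment p n = (1 - sig p n) * moment p n"
    unfolding e ..
  also have "\<dots> = (\<Sum>j<n. sig p (n - 1 - j) * moment p j * moment p (n - 1 - j))"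
    using moment_rec[of n] by (simp add: algebra_simps)
  also have "\<dots> = ratpoly_eval (Pn n) (complex_of_real p) (moment p)"
    unfolding eval_Pn sig_def by (intro sum.cong refl) (auto simp: Suc_diff_Suc)
  finally show ?thesis .
qed


context cp begin

lemma moment_bound: "cmod (moment p n) \<le> Kinf_norm p ^ n"
  using inner_phi_bound[OF Fk_L2, of n] Fk_norm[of n] by (simp add: moment_Fk)

lemma mfun_small:
  assumes q: "0 < q" "q < 1" and z: "Kinf_norm p + 1 < cmod z"
  shows "cmod (mfun p (z / complex_of_real q)) < q"
proof -
  define N where "N = Kinf_norm p"
  have N0: "0 \<le> N" using Kinf_norm_nonneg by (simp add: N_def)
  define u where "u = 1 / cmod z"
  have zpos: "0 < cmod z" using z N0 unfolding N_def by linarith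
  have u: "0 < u" "u * (N + 1) < 1" using z zpos by (auto simp: u_def N_def field_simps)
  have zq: "Kinf_norm p < cmod (z / complex_of_real q)"
  proof -
    have "cmod z \<le> cmod z / q" using q zpos by (simp add: field_simps mult_le_cancel_left1)
    then show ?thesis using z q by (simp add: norm_divide)
  qed
  have sums: "(\<lambda>n. moment p n * inverse (z / complex_of_real q) ^ Suc n) sums mfun p (z / complex_of_real q)"
    by (rule resolvent[OF zq])
  define r where "r = N * q * u"
  have r: "0 \<le> r" "r < 1"
  proof -
    show "0 \<le> r" using N0 q u by (simp add: r_def)
    have "N * u * q \<le> N * u * 1" using N0 q u by (intro mult_left_mono) auto
    then have "N * q * u \<le> N * u" by (simp add: mult_ac)
    then show "r < 1" using u by (simp add: r_def algebra_simps)
  qed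
  have bnd: "norm (moment p n * inverse (z / complex_of_real q) ^ Suc n) \<le> q * u * r ^ n" for n
  proof -
    have "norm (moment p n * inverse (z / complex_of_real q) ^ Suc n) = cmod (moment p n) * (q * u) ^ Suc n"
      using q by (simp add: norm_mult norm_power norm_divide u_def)
    also have "\<dots> \<le> N ^ n * (q * u) ^ Suc n"
      using moment_bound[of n] q u by (intro mult_right_mono) (auto simp: N_def)
    also have "\<dots> = q * u * r ^ n" by (simp add: r_def power_mult_distrib)
    finally show ?thesis .
  qed
  have gs: "(\<lambda>n. q * u * r ^ n) sums (q * u * (1 / (1 - r)))"
    by (intro sums_mult geometric_sums) (use r in auto)
  have "cmod (mfun p (z / complex_of_real q)) = norm (\<Sum>n. moment p n * inverse (z / complex_of_real q) ^ Suc n)"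
    using sums by (simp add: sums_iff)
  also have "\<dots> \<le> (\<Sum>n. norm (moment p n * inverse (z / complex_of_real q) ^ Suc n))"
    by (rule summable_norm) (rule summable_comparison_test'[OF sums_summable[OF gs], of 0], use bnd in auto)
  also have "\<dots> \<le> (\<Sum>n. q * u * r ^ n)"
    by (intro suminf_le bnd sums_summable[OF gs])
       (rule summable_comparison_test'[OF sums_summable[OF gs], of 0], use bnd in auto)
  also have "\<dots> = q * u / (1 - r)" using gs by (simp add: sums_iff)
  also have "\<dots> < q"
  proof -
    have "u < 1 - r"
    proof -
      have "N * u * q \<le> N * u * 1" using N0 q u by (intro mult_left_mono) auto
    then have "N * q * u \<le> N * u" by (simp add: mult_ac)
      then show ?thesis using u by (simp add: r_def algebra_simps)
    qed
    then have "q * u < q * (1 - r)" using q by (intro mult_strict_left_mono) auto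
    then show ?thesis using r by (simp add: pos_divide_less_eq)
  qed
  finally show ?thesis .
qed

end

context cp begin

lemma sig_bound: "cmod (sig p n) \<le> 2"
proof -
  have "cmod (sig p n) = \<bar>p ^ Suc n + (1 - p) ^ Suc n\<bar>" by (simp only: sig_real norm_of_real)
  also have "\<dots> \<le> 1 + 1"
  proof -
    have "p ^ Suc n \<le> 1" using p0 p1 by (intro power_le_one) auto
    moreover have "(1 - p) ^ Suc n \<le> 1" using p0 p1 by (intro power_le_one) auto
    moreover have "0 \<le> p ^ Suc n" "0 \<le> (1 - p) ^ Suc n" using p0 p1 by auto
    ultimately show ?thesis by simp
  qed
  finally show ?thesis by simp
qed

lemma identity:
  assumes z: "Kinf_norm p + 1 < cmod z"
  shows "mfun p z = mfun p (z / complex_of_real p) / (1 - mfun p (z / complex_of_real p))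
            + mfun p (z / complex_of_real (1 - p)) /
              ((1 - mfun p (z / complex_of_real p)) *
               (1 - mfun p (z / complex_of_real p) - mfun p (z / complex_of_real (1 - p))))"
proof -
  define N where "N = Kinf_norm p"
  have N0: "0 \<le> N" using Kinf_norm_nonneg by (simp add: N_def)
  have zpos: "0 < cmod z" using z N0 unfolding N_def by linarith
  have z0: "z \<noteq> 0" using zpos by auto
  define t where "t = inverse z"
  define u where "u = cmod t"
  have ueq: "u = 1 / cmod z" by (simp add: u_def t_def norm_inverse divide_inverse)
  have u: "0 < u" "u * (N + 1) < 1"
  proof -
    show "0 < u" using ueq zpos by simp
    have "u * (N + 1) = (N + 1) / cmod z" using ueq by simp
    also have "\<dots> < 1" using z zpos by (simp add: N_def divide_less_eq_1_pos)
    finally show "u * (N + 1) < 1" .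
  qed
  define m where "m = mfun p z"
  define a where "a = mfun p (z / complex_of_real p)"
  define b where "b = mfun p (z / complex_of_real (1 - p))"
  define mu where "mu = moment p"
  have mub: "cmod (mu n) \<le> N ^ n" for n using moment_bound by (simp add: mu_def N_def)
  have resq: "(\<lambda>n. mu n * (complex_of_real q * t) ^ Suc n) sums mfun p (z / complex_of_real q)"
    if q: "0 < q" "q \<le> 1" for q
  proof -
    have "cmod z \<le> cmod z / q" using q zpos by (simp add: field_simps mult_le_cancel_left1)
    then have zq: "Kinf_norm p < cmod (z / complex_of_real q)" using z q by (simp add: norm_divide)
    have "inverse (z / complex_of_real q) = complex_of_real q * t" by (simp add: t_def divide_inverse)
    then show ?thesis using resolvent[OF zq] by (simp add: mu_def)
  qed
  have ma: "(\<lambda>n. mu n * t ^ Suc n) sums m" using resq[of 1] by (simp add: m_def)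
  have sa: "(\<lambda>n. mu n * (complex_of_real p * t) ^ Suc n) sums a" using resq[of p] p0 p1 by (simp add: a_def)
  have sb: "(\<lambda>n. mu n * (complex_of_real (1 - p) * t) ^ Suc n) sums b" using resq[of "1 - p"] p0 p1 by (simp add: b_def)
  have ss: "(\<lambda>n. sig p n * mu n * t ^ Suc n) sums (a + b)"
  proof -
    have "(\<lambda>n. mu n * (complex_of_real p * t) ^ Suc n + mu n * (complex_of_real (1 - p) * t) ^ Suc n) sums (a + b)"
      by (rule sums_add[OF sa sb])
    moreover have "mu n * (complex_of_real p * t) ^ Suc n + mu n * (complex_of_real (1 - p) * t) ^ Suc n = sig p n * mu n * t ^ Suc n" for n
      by (simp only: sig_def power_mult_distrib of_real_diff of_real_1) (simp add: algebra_simps)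
    ultimately show ?thesis by simp
  qed
  define MM where "MM k = (case k of 0 \<Rightarrow> 0 | Suc n \<Rightarrow> mu n * t ^ Suc n)" for k
  define SS where "SS k = (case k of 0 \<Rightarrow> 0 | Suc n \<Rightarrow> sig p n * mu n * t ^ Suc n)" for k
  have MMs: "MM sums m" using ma sums_Suc_iff[of MM m] by (simp add: MM_def)
  have SSs: "SS sums (a + b)" using ss sums_Suc_iff[of SS "a + b"] by (simp add: SS_def)
  define g where "g = u * (N + 1)"
  have g: "0 \<le> g" "g < 1" using u N0 by (auto simp: g_def)
  have gsum: "summable (\<lambda>k. 2 * g ^ k)" using g by (intro summable_mult summable_geometric) auto
  have MMb: "norm (MM k) \<le> 2 * g ^ k" for k
  proof (cases k)
    case 0 then show ?thesis by (simp add: MM_def)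
  next
    case (Suc n)
    have "norm (MM k) = cmod (mu n) * u ^ Suc n" using Suc by (simp add: MM_def norm_mult norm_power u_def)
    also have "\<dots> \<le> (N + 1) ^ n * u ^ Suc n" using mub[of n] u N0
      by (intro mult_right_mono order_trans[OF _ power_mono[of N "N + 1"]]) auto
    also have "\<dots> \<le> (N + 1) ^ Suc n * u ^ Suc n" using u N0 by (intro mult_right_mono) auto
    also have "\<dots> = g ^ k" using Suc by (simp add: g_def power_mult_distrib mult.commute)
    also have "\<dots> \<le> 2 * g ^ k" using g by simp
    finally show ?thesis .
  qed
  have SSb: "norm (SS k) \<le> 4 * g ^ k" for k
  proof (cases k)
    case 0 then show ?thesis by (simp add: SS_def)
  next
    case (Suc n)
    have "norm (SS k) = cmod (sig p n) * norm (MM k)" using Suc by (simp add: SS_def MM_def norm_mult)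
    also have "\<dots> \<le> 2 * (2 * g ^ k)" by (intro mult_mono sig_bound MMb) auto
    finally show ?thesis by simp
  qed
  have MMn: "summable (\<lambda>k. norm (MM k))" by (rule summable_comparison_test'[OF gsum, of 0]) (use MMb in auto)
  have SSn: "summable (\<lambda>k. norm (SS k))"
    by (rule summable_comparison_test'[OF summable_mult[OF gsum, of 2], of 0]) (use SSb in \<open>auto simp: mult_ac\<close>)
  have CP: "(\<lambda>k. \<Sum>i\<le>k. MM i * SS (k - i)) sums (suminf MM * suminf SS)"
    by (rule Cauchy_product_sums[OF MMn SSn])
  then have CP': "(\<lambda>k. \<Sum>i\<le>k. MM i * SS (k - i)) sums (m * (a + b))"
    using MMs SSs by (simp add: sums_iff)
  have coef: "MM k = SS k + (\<Sum>i\<le>k. MM i * SS (k - i))" for k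
  proof (cases k)
    case 0 then show ?thesis by (simp add: MM_def SS_def)
  next
    case (Suc n)
    have "(\<Sum>i\<le>Suc n. MM i * SS (Suc n - i)) = MM 0 * SS (Suc n) + (\<Sum>i\<le>n. MM (Suc i) * SS (Suc n - Suc i))"
      by (subst sum.atMost_Suc_shift) simp
    also have "\<dots> = (\<Sum>i<Suc n. MM (Suc i) * SS (n - i))" by (simp add: MM_def lessThan_Suc_atMost)
    also have "\<dots> = (\<Sum>i<n. MM (Suc i) * SS (n - i)) + MM (Suc n) * SS 0" by simp
    also have "\<dots> = (\<Sum>i<n. t ^ Suc n * (sig p (n - 1 - i) * mu i * mu (n - 1 - i)))"
    proof -
      have "MM (Suc i) * SS (n - i) = t ^ Suc n * (sig p (n - 1 - i) * mu i * mu (n - 1 - i))" if i: "i < n" for i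
      proof -
        have ni: "n - i = Suc (n - 1 - i)" using i by simp
        have e: "Suc i + Suc (n - 1 - i) = Suc n" using i by simp
        have tt: "t ^ Suc i * t ^ Suc (n - 1 - i) = t ^ Suc n"
          unfolding power_add[symmetric] e ..
        show ?thesis unfolding ni using tt by (simp add: MM_def SS_def mult_ac) blast
      qed
      then show ?thesis by (simp add: SS_def)
    qed
    also have "\<dots> = t ^ Suc n * (\<Sum>i<n. sig p (n - 1 - i) * mu i * mu (n - 1 - i))" by (simp add: sum_distrib_left)
    finally have "(\<Sum>i\<le>k. MM i * SS (k - i)) = t ^ Suc n * (\<Sum>i<n. sig p (n - 1 - i) * mu i * mu (n - 1 - i))"
      using Suc by simp
    moreover have R: "mu n = sig p n * mu n + (\<Sum>i<n. sig p (n - 1 - i) * mu i * mu (n - 1 - i))"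
      using moment_rec[of n] by (simp add: mu_def)
    have gen: "x = y + r \<Longrightarrow> x * T = y * T + T * r" for x y r T :: complex by (simp add: algebra_simps)
    ultimately show ?thesis using Suc gen[OF R, of "t ^ Suc n"] by (simp add: MM_def SS_def)
  qed
  have "(\<lambda>k. SS k + (\<Sum>i\<le>k. MM i * SS (k - i))) sums ((a + b) + m * (a + b))"
    by (rule sums_add[OF SSs CP'])
  moreover have "(\<lambda>k. SS k + (\<Sum>i\<le>k. MM i * SS (k - i))) = MM" by (rule ext) (rule coef[symmetric])
  ultimately have "MM sums ((a + b) + m * (a + b))" by simp
  then have meq: "m = (a + b) + m * (a + b)" using MMs sums_unique2 by blast
  have a1: "cmod a < p" unfolding a_def by (rule mfun_small[OF p0 p1 z])
  have b1: "cmod b < 1 - p" unfolding b_def using p0 p1 by (intro mfun_small z) auto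
  have na: "1 - a \<noteq> 0"
  proof
    assume "1 - a = 0" then have "a = 1" by simp
    then show False using a1 p1 by simp
  qed
  have nab: "1 - a - b \<noteq> 0"
  proof
    assume "1 - a - b = 0" then have "a + b = 1" by (simp add: algebra_simps)
    moreover have "cmod (a + b) < 1" using a1 b1 norm_triangle_ineq[of a b] by linarith
    ultimately show False by simp
  qed
  have gen2: "x = s + x * s \<Longrightarrow> x * (1 - s) = s" for x s :: complex
  proof -
    assume h: "x = s + x * s"
    have "x * (1 - s) = x - x * s" by (simp add: algebra_simps)
    also have "\<dots> = s" using h by (metis add_diff_cancel_right')
    finally show ?thesis .
  qed
  have "m * (1 - (a + b)) = a + b" by (rule gen2[OF meq])
  then have "m * (1 - a - b) = a + b" by (simp add: diff_diff_eq)
  then have m_eq: "m = (a + b) / (1 - a - b)" using nab by (simp add: eq_divide_eq)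
  have "(a + b) / (1 - a - b) = a / (1 - a) + b / ((1 - a) * (1 - a - b))"
  proof -
    define d where "d = (1 - a) * (1 - a - b)"
    have d0: "d \<noteq> 0" using na nab by (simp add: d_def)
    have L: "(a + b) / (1 - a - b) * d = (a + b) * (1 - a)" using nab by (simp add: d_def)
    have R: "(a / (1 - a) + b / ((1 - a) * (1 - a - b))) * d = a * (1 - a - b) + b"
      using na nab by (simp add: d_def distrib_right)
    have P: "(a + b) * (1 - a) = a * (1 - a - b) + b" by algebra
    show ?thesis using L R P d0 by (metis mult_right_cancel)
  qed
  then show ?thesis using m_eq by (simp add: m_def a_def b_def)
qed

end

theorem proposition7p2:
  shows "(\<forall>p::real. 0 < p \<and> p < 1 \<longrightarrow>
      (\<forall>z::complex. cmod z > Kinf_norm p \<longrightarrow>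
          (\<lambda>n. moment p n * inverse z ^ (Suc n)) sums mfun p z)
    \<and> (\<forall>z::complex. cmod z > Kinf_norm p + 1 \<longrightarrow>
          mfun p z = mfun p (z / complex_of_real p) / (1 - mfun p (z / complex_of_real p))
            + mfun p (z / complex_of_real (1 - p)) /
              ((1 - mfun p (z / complex_of_real p)) *
               (1 - mfun p (z / complex_of_real p) - mfun p (z / complex_of_real (1 - p)))))
    \<and> (\<forall>n::nat. n \<ge> 1 \<longrightarrow> 1 - p ^ (n + 1) - (1 - p) ^ (n + 1) > 0)
    \<and> moment p 0 = 1
    \<and> moment p 1 = complex_of_real (1 / (2 * p * (1 - p)))
    \<and> moment p 1 = complex_of_real (1 / (1 - (p^2 + (1 - p)^2)))
    \<and> moment p 2 = complex_of_real ((p^2 - p + 1) / (3 * p^2 * (1 - p)^2))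
    \<and> moment p 3 = complex_of_real ((12 * p^4 - 24 * p^3 + 38 * p^2 - 26 * p + 11) /
                                    (24 * p^3 * (1 - p)^3 * (p^2 - p + 2))))
   \<and> (\<forall>n::nat. n \<ge> 1 \<longrightarrow> (\<exists>P::ratpoly. ratpoly_vars n P \<and>
        (\<forall>p::real. 0 < p \<and> p < 1 \<longrightarrow>
           complex_of_real (1 - p ^ (n + 1) - (1 - p) ^ (n + 1)) * moment p n
             = ratpoly_eval P (complex_of_real p) (moment p))))"
proof -
  have part1: "(\<forall>z::complex. cmod z > Kinf_norm p \<longrightarrow>
          (\<lambda>n. moment p n * inverse z ^ (Suc n)) sums mfun p z)
    \<and> (\<forall>z::complex. cmod z > Kinf_norm p + 1 \<longrightarrow>
          mfun p z = mfun p (z / complex_of_real p) / (1 - mfun p (z / complex_of_real p))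
            + mfun p (z / complex_of_real (1 - p)) /
              ((1 - mfun p (z / complex_of_real p)) *
               (1 - mfun p (z / complex_of_real p) - mfun p (z / complex_of_real (1 - p)))))
    \<and> (\<forall>n::nat. n \<ge> 1 \<longrightarrow> 1 - p ^ (n + 1) - (1 - p) ^ (n + 1) > 0)
    \<and> moment p 0 = 1
    \<and> moment p 1 = complex_of_real (1 / (2 * p * (1 - p)))
    \<and> moment p 1 = complex_of_real (1 / (1 - (p^2 + (1 - p)^2)))
    \<and> moment p 2 = complex_of_real ((p^2 - p + 1) / (3 * p^2 * (1 - p)^2))
    \<and> moment p 3 = complex_of_real ((12 * p^4 - 24 * p^3 + 38 * p^2 - 26 * p + 11) /
                                    (24 * p^3 * (1 - p)^3 * (p^2 - p + 2)))"
    if p: "0 < p" "p < 1" for p :: real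
  proof -
    interpret cp p using p by unfold_locales
    have e: "1 - (p^2 + (1 - p)^2) = 2 * p * (1 - p)" by algebra
    show ?thesis
      using resolvent identity pos_gap[OF p] moment_0 mom1 mom2 mom3
      by (simp add: m1_def m2_def m3_def e)
  qed
  have part2: "\<exists>P::ratpoly. ratpoly_vars n P \<and>
        (\<forall>p::real. 0 < p \<and> p < 1 \<longrightarrow>
           complex_of_real (1 - p ^ (n + 1) - (1 - p) ^ (n + 1)) * moment p n
             = ratpoly_eval P (complex_of_real p) (moment p))" for n :: nat
  proof (intro exI conjI allI impI)
    show "ratpoly_vars n (Pn n)" by (rule Pn_vars)
    fix p :: real assume "0 < p \<and> p < 1"
    then interpret cp p by unfold_locales auto
    show "complex_of_real (1 - p ^ (n + 1) - (1 - p) ^ (n + 1)) * moment p n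
             = ratpoly_eval (Pn n) (complex_of_real p) (moment p)" by (rule poly_rec)
  qed
  show ?thesis using part1 part2 by blast
qed


end
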